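(* Let $W$ be a complex vector space and let $A(x_1,x_2)\in\mathrm{Hom}(W,W((x_1))((x_2)))$, $B(x_1,x_2)\in\mathrm{Hom}(W,W((x_2))((x_1)))$, $C(x_0,x_2)\in(\mathrm{Hom}(W,W((x_2))))((x_0))$. If there exists $k\in\mathbb{N}$ such that $$(x_1-x_2)^kA(x_1,x_2)=(x_1-x_2)^kB(x_1,x_2)\quad\text{and}\quad\big((x_1-x_2)^kA(x_1,x_2)\big)|_{x_1=x_2e^{x_0}}=x_2^k(e^{x_0}-1)^kC(x_0,x_2),$$ then $$(x_2z)^{-1}\delta\Big(\frac{x_1-x_2}{x_2z}\Big)A(x_1,x_2)-(x_2z)^{-1}\delta\Big(\frac{x_2-x_1}{-x_2z}\Big)B(x_1,x_2)=x_1^{-1}\delta\Big(\frac{x_2(1+z)}{x_1}\Big)C(\log(1+z),x_2).$$ Conversely, if this last identity holds, then there exists $k\in\mathbb{N}$ satisfying the two displayed conditions above.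
   Context: $\delta(x)=\sum_{n\in\mathbb{Z}}x^n$; binomial convention: $(a+b)^n$ for $n<0$ is expanded in nonnegative powers of the second summand (so $(x_1-x_2)^n$ in nonnegative powers of $x_2$, $(x_2-x_1)^n$ in nonnegative powers of $x_1$, $(1+z)^n$ in nonnegative powers of $z$). $\log(1+z)=\sum_{n\ge1}(-1)^{n-1}z^n/n$, and $C(\log(1+z),x_2)$ is obtained by substituting $x_0=\log(1+z)$. The condition $(x_1-x_2)^kA=(x_1-x_2)^kB$ forces this element into $\mathrm{Hom}(W,W((x_1,x_2)))$, so the substitution $x_1=x_2e^{x_0}$ is defined. *)

theory Defs
  imports "HOL-Computational_Algebra.Formal_Laurent_Series" "HOL-Library.Groups_Big_Fun"
begin

text \<open>
A formal series in two variables x, y with values in W is represented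
by its coefficient function  f :: int => int => 'w,  f m p = coefficient of x^m y^p.
Elements of Hom(W, W[[...]]) are represented by coefficient maps
A :: int => int => 'w => 'w  (coefficient of x1^m x2^p, a linear map on W).
All infinite sums below are sums of finitely supported families (Sum_any);
under the truncation hypotheses of the theorem they are genuinely finite.
\<close>

definition mult2 :: "(complex \<Rightarrow> 'w \<Rightarrow> 'w::ab_group_add) \<Rightarrow> (int \<Rightarrow> int \<Rightarrow> complex)
    \<Rightarrow> (int \<Rightarrow> int \<Rightarrow> 'w) \<Rightarrow> int \<Rightarrow> int \<Rightarrow> 'w" where
  "mult2 scale f g m p = Sum_any (\<lambda>(a, b). scale (f a b) (g (m - a) (p - b)))"

text \<open>(x - y)^n expanded in nonnegative powers of the second summand y:
  sum over i >= 0 of (n choose i) x^(n-i) (-y)^i.\<close>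
definition binom_xy :: "int \<Rightarrow> int \<Rightarrow> int \<Rightarrow> complex" where
  "binom_xy n a b = (if b \<ge> 0 \<and> a = n - b then (of_int n gchoose nat b) * (-1) ^ nat b else 0)"

text \<open>(y - x)^n expanded in nonnegative powers of the second summand x:
  sum over i >= 0 of (n choose i) y^(n-i) (-x)^i; as a series in (x, y).\<close>
definition binom_yx :: "int \<Rightarrow> int \<Rightarrow> int \<Rightarrow> complex" where
  "binom_yx n a b = (if a \<ge> 0 \<and> b = n - a then (of_int n gchoose nat a) * (-1) ^ nat a else 0)"

definition shift_y :: "int \<Rightarrow> (int \<Rightarrow> int \<Rightarrow> 'a::zero) \<Rightarrow> int \<Rightarrow> int \<Rightarrow> 'a" where
  "shift_y r f a b = f a (b - r)"

text \<open>Coefficient of z^r x1^m x2^p in (x2 z)^(-1) delta((x1-x2)/(x2 z)) A(x1,x2) w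
  = sum_n (x1-x2)^n x2^(-n-1) z^(-n-1) A(x1,x2) w; the z^r part has n = -r-1.\<close>
definition delta_term1 :: "(complex \<Rightarrow> 'w \<Rightarrow> 'w::ab_group_add) \<Rightarrow> (int \<Rightarrow> int \<Rightarrow> 'w \<Rightarrow> 'w)
    \<Rightarrow> 'w \<Rightarrow> int \<Rightarrow> int \<Rightarrow> int \<Rightarrow> 'w" where
  "delta_term1 scale A w r m p =
     mult2 scale (shift_y r (binom_xy (- r - 1))) (\<lambda>a b. A a b w) m p"

text \<open>Coefficient of z^r x1^m x2^p in (x2 z)^(-1) delta((x2-x1)/(-x2 z)) B(x1,x2) w
  = sum_n (-1)^n (x2-x1)^n x2^(-n-1) z^(-n-1) B(x1,x2) w; the z^r part has n = -r-1.\<close>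
definition delta_term2 :: "(complex \<Rightarrow> 'w \<Rightarrow> 'w::ab_group_add) \<Rightarrow> (int \<Rightarrow> int \<Rightarrow> 'w \<Rightarrow> 'w)
    \<Rightarrow> 'w \<Rightarrow> int \<Rightarrow> int \<Rightarrow> int \<Rightarrow> 'w" where
  "delta_term2 scale B w r m p =
     mult2 scale (\<lambda>a b. (-1::complex) powi (- r - 1) * shift_y r (binom_yx (- r - 1)) a b)
       (\<lambda>a b. B a b w) m p"

definition log1p_fls :: "complex fls" where
  "log1p_fls = fps_to_fls (fps_ln 1)"

text \<open>C(log(1+z), x2) w, where C j q = coefficient of x0^j x2^q:
  coefficient of z^s x2^q is  sum_j [z^s] (log(1+z))^j * C j q w.\<close>
definition C_log :: "(complex \<Rightarrow> 'w \<Rightarrow> 'w::ab_group_add) \<Rightarrow> (int \<Rightarrow> int \<Rightarrow> 'w \<Rightarrow> 'w)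
    \<Rightarrow> 'w \<Rightarrow> int \<Rightarrow> int \<Rightarrow> 'w" where
  "C_log scale C w s q = Sum_any (\<lambda>j. scale (fls_nth (log1p_fls powi j) s) (C j q w))"

text \<open>Coefficient of z^r x1^m x2^p in x1^(-1) delta(x2(1+z)/x1) C(log(1+z),x2) w
  = sum_n x1^(-n-1) x2^n (1+z)^n C(log(1+z),x2) w; the x1^m part has n = -m-1.\<close>
definition delta_rhs :: "(complex \<Rightarrow> 'w \<Rightarrow> 'w::ab_group_add) \<Rightarrow> (int \<Rightarrow> int \<Rightarrow> 'w \<Rightarrow> 'w)
    \<Rightarrow> 'w \<Rightarrow> int \<Rightarrow> int \<Rightarrow> int \<Rightarrow> 'w" where
  "delta_rhs scale C w r m p =
     (let n = - m - 1 in
      Sum_any (\<lambda>s. scale (fls_nth ((1 + fls_X) powi n) (r - s)) (C_log scale C w s (p - n))))"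

text \<open>Substitution x1 = x2 e^(x0) into a series D(x1,x2) w (coefficient of x1^m x2^p),
  giving the coefficient of x0^j x2^q: sum over m of [x0^j] e^(m x0) * D m (q-m) w.\<close>
definition subst_exp :: "(complex \<Rightarrow> 'w \<Rightarrow> 'w::ab_group_add) \<Rightarrow> (int \<Rightarrow> int \<Rightarrow> 'w)
    \<Rightarrow> int \<Rightarrow> int \<Rightarrow> 'w" where
  "subst_exp scale D j q =
     (if j < 0 then 0 else Sum_any (\<lambda>m. scale (fps_nth (fps_exp (of_int m)) (nat j)) (D m (q - m))))"

text \<open>Coefficient of x0^j x2^q in x2^k (e^(x0) - 1)^k C(x0,x2) w.\<close>
definition exp_rhs :: "(complex \<Rightarrow> 'w \<Rightarrow> 'w::ab_group_add) \<Rightarrow> nat \<Rightarrow> (int \<Rightarrow> int \<Rightarrow> 'w \<Rightarrow> 'w)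
    \<Rightarrow> 'w \<Rightarrow> int \<Rightarrow> int \<Rightarrow> 'w" where
  "exp_rhs scale k C w j q =
     Sum_any (\<lambda>i. scale (fls_nth (fps_to_fls ((fps_exp 1 - 1) ^ k)) i) (C (j - i) (q - int k) w))"

end

theory Submission
  imports Defs
begin
unbundle fps_syntax

lemma fls_times_nth_Sum_any:
  "(f * g) $$ n = Sum_any (\<lambda>i. f $$ i * g $$ (n - i))" for f g :: "'a::comm_ring_1 fls"
proof -
  have "(f * g) $$ n = (\<Sum>i=fls_subdegree f..n - fls_subdegree g. f $$ i * g $$ (n - i))"
    by (rule fls_times_nth(2))
  also have "\<dots> = Sum_any (\<lambda>i. f $$ i * g $$ (n - i))"
  proof (rule Sum_any.expand_superset[symmetric])
    show "{a. f $$ a * g $$ (n - a) \<noteq> 0} \<subseteq> {fls_subdegree f..n - fls_subdegree g}"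
    proof
      fix x assume "x \<in> {a. f $$ a * g $$ (n - a) \<noteq> 0}"
      then have "f $$ x \<noteq> 0" "g $$ (n - x) \<noteq> 0" by auto
      then have "\<not> x < fls_subdegree f" "\<not> n - x < fls_subdegree g"
        using fls_eq0_below_subdegree by metis+
      then show "x \<in> {fls_subdegree f..n - fls_subdegree g}" by auto
    qed
  qed simp
  finally show ?thesis .
qed

definition EE :: "complex fps" where "EE = fps_exp 1 - 1"
definition LL :: "complex fps" where "LL = fps_ln 1"

lemma EE_0: "EE $ 0 = 0" and EE_1: "EE $ 1 = 1" and EE_nz: "EE \<noteq> 0"
  by (auto simp: EE_def fps_eq_iff intro!: exI[of _ 1])
lemma LL_0: "LL $ 0 = 0" and LL_1: "LL $ 1 = 1" and LL_nz: "LL \<noteq> 0"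
  by (auto simp: LL_def fps_ln_def fps_eq_iff intro!: exI[of _ 1])

lemma EE_1': "EE $ 1 \<noteq> 0" and LL_1': "LL $ 1 \<noteq> 0" by (simp_all add: EE_def LL_def fps_ln_def)

lemma subdeg1: assumes "H $ 0 = 0" "H $ 1 \<noteq> 0" shows "fls_subdegree (fps_to_fls H) = 1"
proof -
  have "H \<noteq> 0" using assms by auto
  moreover have "subdegree H = 1" using assms by (intro subdegreeI) auto
  ultimately show ?thesis by (simp add: fls_subdegree_fls_to_fps)
qed

lemma powi_below:
  fixes H :: "complex fps"
  assumes "H $ 0 = 0" "H $ 1 \<noteq> 0" "j < s"
  shows "(fps_to_fls H powi s) $$ j = 0"
  using assms subdeg1[OF assms(1,2)] by (intro fls_eq0_below_subdegree) simp

lemma compose_high_zero: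
  fixes H :: "complex fps"
  assumes H0: "H $ 0 = 0" and H1: "H $ 1 \<noteq> 0" and R: "\<And>s. s \<le> j \<Longrightarrow> R $$ s = 0"
  shows "fls_compose_fps R H $$ j = 0"
proof (cases "R = 0")
  case False
  define e where "e = fls_subdegree R"
  have "R $$ e \<noteq> 0" using False by (simp add: e_def)
  then have ej: "j < e" using R[of e] by (metis not_less)
  have "fls_compose_fps R H $$ j
      = (fps_to_fls (fls_base_factor_to_fps R oo H) * fps_to_fls H powi e) $$ j"
    by (simp add: fls_compose_fps_def e_def)
  also have "\<dots> = Sum_any (\<lambda>i. fps_to_fls (fls_base_factor_to_fps R oo H) $$ i * (fps_to_fls H powi e) $$ (j - i))"
    by (rule fls_times_nth_Sum_any)
  also have "(\<lambda>i. fps_to_fls (fls_base_factor_to_fps R oo H) $$ i * (fps_to_fls H powi e) $$ (j - i)) = (\<lambda>i. 0)"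
  proof (rule ext)
    fix i
    show "fps_to_fls (fls_base_factor_to_fps R oo H) $$ i * (fps_to_fls H powi e) $$ (j - i) = 0"
    proof (cases "i < 0")
      case False
      then have "j - i < e" using ej by simp
      then show ?thesis using powi_below[OF H0 H1] by simp
    qed simp
  qed
  finally show ?thesis by simp
qed simp

lemma compose_nth:
  fixes H :: "complex fps"
  assumes H0: "H $ 0 = 0" and H1: "H $ 1 \<noteq> 0"
  shows "fls_compose_fps F H $$ j = Sum_any (\<lambda>s. F $$ s * (fps_to_fls H powi s) $$ j)"
proof -
  have Hnz: "H \<noteq> 0" using H1 by auto
  define d where "d = fls_subdegree F"
  define P where "P = (\<Sum>s\<in>{d..j}. fls_const (F $$ s) * fls_X powi s)"
  have Pnth: "P $$ u = (if u \<in> {d..j} then F $$ u else 0)" for u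
  proof -
    have "P $$ u = (\<Sum>s\<in>{d..j}. (fls_const (F $$ s) * fls_X powi s) $$ u)"
      by (simp add: P_def fls_nth_sum)
    also have "\<dots> = (\<Sum>s\<in>{d..j}. if s = u then F $$ s else 0)"
      by (intro sum.cong) auto
    also have "\<dots> = (if u \<in> {d..j} then F $$ u else 0)"
      by (simp add: sum.delta')
    finally show ?thesis .
  qed
  have "fls_compose_fps (F - P) H $$ j = 0"
  proof (rule compose_high_zero[OF H0 H1])
    fix s assume "s \<le> j"
    then show "(F - P) $$ s = 0"
      by (cases "s < d") (auto simp: Pnth d_def)
  qed
  then have "fls_compose_fps F H $$ j = fls_compose_fps P H $$ j"
    by (simp add: fls_compose_fps_diff[OF Hnz H0])
  also have "fls_compose_fps P H = (\<Sum>s\<in>{d..j}. fls_compose_fps (fls_const (F $$ s) * fls_X powi s) H)"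
    unfolding P_def
    by (induction rule: infinite_finite_induct) (auto simp: fls_compose_fps_add[OF Hnz H0])
  also have "\<dots> = (\<Sum>s\<in>{d..j}. fls_const (F $$ s) * fps_to_fls H powi s)"
    by (intro sum.cong refl) (simp add: fls_compose_fps_mult[OF Hnz H0] fls_compose_fps_powi[OF Hnz H0] del: fls_X_power_int)
  also have "\<dots> $$ j = (\<Sum>s\<in>{d..j}. F $$ s * (fps_to_fls H powi s) $$ j)"
    by (simp add: fls_nth_sum)
  also have "\<dots> = Sum_any (\<lambda>s. F $$ s * (fps_to_fls H powi s) $$ j)"
  proof (rule Sum_any.expand_superset[symmetric])
    show "{s. F $$ s * (fps_to_fls H powi s) $$ j \<noteq> 0} \<subseteq> {d..j}"
    proof
      fix s assume "s \<in> {s. F $$ s * (fps_to_fls H powi s) $$ j \<noteq> 0}"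
      then have "F $$ s \<noteq> 0" "(fps_to_fls H powi s) $$ j \<noteq> 0" by auto
      then have "\<not> s < d" "\<not> j < s" using powi_below[OF H0 H1] by (auto simp: d_def)
      then show "s \<in> {d..j}" by auto
    qed
  qed simp
  finally show ?thesis .
qed

abbreviation "ElF \<equiv> fps_to_fls EE"
abbreviation "LlF \<equiv> fps_to_fls LL"

lemma LL_EE: "LL oo EE = fps_X" and EE_LL: "EE oo LL = fps_X"
  using fps_inv_fps_exp_compose[of "1::complex"] fps_ln_fps_exp_inv[of "1::complex"]
  by (simp_all add: LL_def EE_def)

lemma compLE: "fls_compose_fps LlF EE = fls_X"
  using EE_0 EE_nz by (simp add: LL_EE)
lemma compEL: "fls_compose_fps ElF LL = fls_X"
  using LL_0 LL_nz by (simp add: EE_LL)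

lemma X_powi_nth: "((fls_X::complex fls) powi a) $$ j = (if j = a then 1 else 0)"
  by simp

lemma inv1: "Sum_any (\<lambda>s. (LlF powi j') $$ s * (ElF powi s) $$ j) = (if j = j' then 1 else 0)"
proof -
  have "Sum_any (\<lambda>s. (LlF powi j') $$ s * (ElF powi s) $$ j) = fls_compose_fps (LlF powi j') EE $$ j"
    by (rule compose_nth[OF EE_0 EE_1', symmetric])
  also have "\<dots> = (fls_X powi j') $$ j"
    using EE_0 EE_nz by (simp add: fls_compose_fps_powi compLE del: fls_X_power_int)
  finally show ?thesis by (simp only: X_powi_nth)
qed

lemma inv2: "Sum_any (\<lambda>j. (ElF powi s') $$ j * (LlF powi j) $$ s) = (if s = s' then 1 else 0)"
proof -
  have "Sum_any (\<lambda>j. (ElF powi s') $$ j * (LlF powi j) $$ s) = fls_compose_fps (ElF powi s') LL $$ s"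
    by (rule compose_nth[OF LL_0 LL_1', symmetric])
  also have "\<dots> = (fls_X powi s') $$ s"
    using LL_0 LL_nz by (simp add: fls_compose_fps_powi compEL del: fls_X_power_int)
  finally show ?thesis by (simp only: X_powi_nth)
qed

definition Et :: "int \<Rightarrow> complex fls" where "Et t = fps_to_fls (fps_exp (of_int t))"

lemma Et_powi: "Et t = fps_to_fls (fps_exp 1) powi t"
proof (cases "t \<ge> 0")
  case True
  then obtain n where "t = int n" by (metis nonneg_int_cases)
  have "fps_exp (1::complex) ^ n = fps_exp (of_nat n)" by (simp add: fps_exp_power_mult)
  then have "fps_to_fls (fps_exp (1::complex)) ^ n = fps_to_fls (fps_exp (of_nat n))"
    by (simp only: fps_to_fls_power[symmetric])
  then show ?thesis using \<open>t = int n\<close> by (simp add: Et_def)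
next
  case False
  then obtain n where t: "t = - int n" using that[of "nat (-t)"] by simp
  have sd: "subdegree (fps_exp (1::complex) ^ n) = 0" by (simp add: subdegree_eq_0_iff)
  have "fps_to_fls (fps_exp 1) powi t = inverse (fps_to_fls (fps_exp (1::complex) ^ n))"
    by (simp add: t power_int_minus fps_to_fls_power)
  also have "\<dots> = fps_to_fls (inverse (fps_exp (1::complex) ^ n))"
    by (rule fls_inverse_fps_to_fls[OF sd])
  also have "inverse (fps_exp (1::complex) ^ n) = fps_exp (of_int t)"
  proof -
    have "fps_exp (1::complex) ^ n = fps_exp (of_nat n)" by (simp add: fps_exp_power_mult)
    moreover have "fps_exp (- of_nat n :: complex) = inverse (fps_exp (of_nat n))" by (rule fps_exp_neg)
    ultimately show ?thesis by (simp add: t)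
  qed
  finally show ?thesis by (simp add: Et_def)
qed

lemma exp1_eq: "fps_to_fls (fps_exp (1::complex)) = 1 + ElF"
  by (simp add: EE_def)

lemma comp_onepX_E: "fls_compose_fps ((1 + fls_X) powi t) EE = Et t"
  using EE_0 EE_nz
  by (simp add: fls_compose_fps_powi fls_compose_fps_add Et_powi exp1_eq)

lemma comp_Et_L: "fls_compose_fps (Et t) LL = (1 + fls_X) powi t"
proof -
  have "fls_compose_fps (1 + ElF) LL = 1 + fls_X"
    using LL_0 LL_nz by (simp add: fls_compose_fps_add compEL)
  then show ?thesis
    using LL_0 LL_nz by (simp add: fls_compose_fps_powi Et_powi exp1_eq)
qed

lemma shiftk_nth: "((fls_X::complex fls) powi (- k) * G) $$ s = G $$ (s + k)"
  using fls_X_intpow_times_conv_shift(1)[of "-k" G] by simp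

lemma S7: "Sum_any (\<lambda>j. (ElF powi (- k) * Et t) $$ j * (LlF powi j) $$ s) = ((1 + fls_X) powi t) $$ (s + k)"
proof -
  have "Sum_any (\<lambda>j. (ElF powi (- k) * Et t) $$ j * (LlF powi j) $$ s)
      = fls_compose_fps (ElF powi (- k) * Et t) LL $$ s"
    by (rule compose_nth[OF LL_0 LL_1', symmetric])
  also have "fls_compose_fps (ElF powi (- k) * Et t) LL = fls_X powi (- k) * (1 + fls_X) powi t"
    using LL_0 LL_nz by (simp add: fls_compose_fps_mult fls_compose_fps_powi compEL comp_Et_L del: fls_X_power_int)
  finally show ?thesis by (simp only: shiftk_nth)
qed

lemma S8: "Sum_any (\<lambda>s. ((1 + fls_X) powi t) $$ (s + k) * (ElF powi s) $$ j) = (ElF powi (- k) * Et t) $$ j"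
proof -
  have "Sum_any (\<lambda>s. ((1 + fls_X) powi t) $$ (s + k) * (ElF powi s) $$ j)
     = Sum_any (\<lambda>s. (fls_X powi (- k) * (1 + fls_X) powi t) $$ s * (ElF powi s) $$ j)"
    by (simp only: shiftk_nth)
  also have "\<dots> = fls_compose_fps (fls_X powi (- k) * (1 + fls_X) powi t) EE $$ j"
    by (rule compose_nth[OF EE_0 EE_1', symmetric])
  also have "fls_compose_fps (fls_X powi (- k) * (1 + fls_X) powi t) EE = ElF powi (- k) * Et t"
    using EE_0 EE_nz by (simp add: fls_compose_fps_mult fls_compose_fps_powi comp_onepX_E del: fls_X_power_int)
  finally show ?thesis .
qed

lemma b1_nth: "((1 + fls_X) powi t) $$ s = (if s < 0 then 0 else (of_int t :: complex) gchoose nat s)"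
  by (simp add: one_plus_fls_X_powi_eq)

lemma Et_nth: "Et t $$ j = (if j < 0 then 0 else fps_exp (of_int t) $ nat j)"
  by (simp add: Et_def)

lemma Ek_eq: "fps_to_fls ((fps_exp 1 - 1) ^ k) = ElF powi (int k)"
  by (simp add: EE_def fps_to_fls_power)

definition cN :: "int \<Rightarrow> int \<Rightarrow> complex" where
  "cN n i = (if 0 \<le> i then (of_int n gchoose nat i) * (-1) ^ nat i else 0)"

lemma cN_negidx: "i < 0 \<Longrightarrow> cN n i = 0" by (simp add: cN_def)

lemma cN_nat: "cN (int n) (int i) = of_nat (n choose i) * (-1) ^ i"
  by (simp add: cN_def binomial_gbinomial)

lemma gch_neg: "((- of_nat l - 1 :: complex) gchoose i) = (-1) ^ i * of_nat ((i + l) choose i)"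
proof -
  have "((- of_nat l - 1 :: complex) gchoose i) = (-1) ^ i * ((of_nat i - (- of_nat l - 1) - 1) gchoose i)"
    by (rule gbinomial_negated_upper)
  also have "(of_nat i - (- of_nat l - 1) - 1 :: complex) = of_nat (i + l)" by simp
  finally show ?thesis by (simp add: binomial_gbinomial)
qed

lemma cN_neg: "cN (- int l - 1) (int i) = of_nat ((i + l) choose i)"
proof -
  have "cN (- int l - 1) (int i) = ((- of_nat l - 1 :: complex) gchoose i) * (-1) ^ i"
    by (simp add: cN_def)
  also have "\<dots> = of_nat ((i + l) choose i)" by (simp add: gch_neg)
  finally show ?thesis .
qed

lemma Vand: "Sum_any (\<lambda>i. cN a i * cN b (u - i)) = cN (a + b) u"
proof (cases "u < 0")
  case True
  have eq: "(\<lambda>i. cN a i * cN b (u - i)) = (\<lambda>i. 0)"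
  proof
    fix i show "cN a i * cN b (u - i) = 0"
      using True by (cases "i < 0") (auto simp: cN_negidx)
  qed
  show ?thesis unfolding eq using True by (simp add: cN_negidx)
next
  case False
  then obtain n where u: "u = int n" by (metis nonneg_int_cases not_less)
  have "Sum_any (\<lambda>i. cN a i * cN b (u - i)) = (\<Sum>i\<in>int ` {0..n}. cN a i * cN b (u - i))"
  proof (rule Sum_any.expand_superset)
    show "{i. cN a i * cN b (u - i) \<noteq> 0} \<subseteq> int ` {0..n}"
    proof
      fix i assume "i \<in> {i. cN a i * cN b (u - i) \<noteq> 0}"
      then have "0 \<le> i" "0 \<le> u - i" by (auto simp: cN_def split: if_splits)
      then show "i \<in> int ` {0..n}" using u by (auto intro!: image_eqI[of _ _ "nat i"])
    qed
  qed simp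
  also have "\<dots> = (\<Sum>i\<in>{0..n}. cN a (int i) * cN b (u - int i))"
    by (simp add: sum.reindex)
  also have "\<dots> = (\<Sum>i\<in>{0..n}. ((of_int a gchoose i) * (of_int b gchoose (n - i))) * (-1) ^ n)"
  proof (rule sum.cong)
    fix i assume "i \<in> {0..n}"
    then have i: "i \<le> n" by simp
    then have e: "u - int i = int (n - i)" using u by simp
    have p: "(-1::complex) ^ i * (-1) ^ (n - i) = (-1) ^ n"
      using i by (simp flip: power_add)
    have "cN a (int i) * cN b (u - int i) = ((of_int a gchoose i) * (-1) ^ i) * ((of_int b gchoose (n - i)) * (-1) ^ (n - i))"
      by (simp only: e) (simp add: cN_def)
    also have "\<dots> = ((of_int a gchoose i) * (of_int b gchoose (n - i))) * ((-1) ^ i * (-1) ^ (n - i))"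
      by (simp only: ac_simps)
    finally show "cN a (int i) * cN b (u - int i) = ((of_int a gchoose i) * (of_int b gchoose (n - i))) * (-1) ^ n"
      by (simp only: p)
  qed simp
  also have "\<dots> = ((of_int a + of_int b) gchoose n) * (-1) ^ n"
    by (simp add: sum_distrib_right[symmetric] gbinomial_Vandermonde)
  also have "\<dots> = cN (a + b) u" by (simp add: cN_def u)
  finally show ?thesis .
qed

lemma neg1_diff: "i \<le> k \<Longrightarrow> (-1::complex) ^ (k - i) = (-1) ^ k * (-1) ^ i"
  by (cases "even i") (simp_all add: power_diff)

lemma cN_sym: "cN (int k) (int k - l) = (-1) ^ k * cN (int k) l"
proof (cases "0 \<le> l \<and> l \<le> int k")
  case True
  then obtain i where l: "l = int i" "i \<le> k" by (metis nonneg_int_cases of_nat_le_iff)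
  have e: "int k - l = int (k - i)" using l by simp
  have "cN (int k) (int k - l) = of_nat (k choose (k - i)) * (-1) ^ (k - i)"
    by (simp only: e cN_nat)
  also have "\<dots> = of_nat (k choose i) * ((-1) ^ k * (-1) ^ i)"
    using l(2) by (simp add: binomial_symmetric[OF l(2), symmetric] neg1_diff)
  also have "\<dots> = (-1) ^ k * cN (int k) l" by (simp add: l cN_nat)
  finally show ?thesis .
next
  case False
  then have "l < 0 \<or> l > int k" by auto
  then show ?thesis
  proof
    assume "l < 0"
    then have "int k - l = int (nat (int k - l))" "nat (int k - l) > k" by auto
    then have "cN (int k) (int k - l) = cN (int k) (int (nat (int k - l)))" by simp
    also have "\<dots> = 0" using \<open>nat (int k - l) > k\<close> by (simp only: cN_nat binomial_eq_0) simp
    finally show ?thesis using \<open>l < 0\<close> by (simp add: cN_negidx)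
  next
    assume "l > int k"
    then have "l = int (nat l)" "nat l > k" by auto
    then have "cN (int k) l = cN (int k) (int (nat l))" by simp
    also have "\<dots> = 0" using \<open>nat l > k\<close> by (simp only: cN_nat binomial_eq_0) simp
    finally show ?thesis using \<open>l > int k\<close> by (simp add: cN_negidx)
  qed
qed

lemma dd_id: "cN N (N - s) - (-1) powi N * cN N s = ((1 + fls_X) powi (- s - 1)) $$ (- N - 1)"
proof (cases "N \<ge> 0")
  case True
  then obtain n where N: "N = int n" by (metis nonneg_int_cases)
  have R: "((1 + fls_X) powi (- s - 1)) $$ (- N - 1) = (0::complex)" using True by (simp add: b1_nth)
  have pw: "(-1::complex) powi N = (-1) ^ n" by (simp add: N)
  show ?thesis
  proof (cases "s < 0")
    case True
    have e: "N - s = int (nat (N - s))" using True N by simp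
    have "cN N (N - s) = 0"
      using True N by (subst e) (simp only: N cN_nat binomial_eq_0, simp)
    then show ?thesis using True R by (simp add: cN_negidx)
  next
    case False
    then obtain m where s: "s = int m" by (metis nonneg_int_cases not_less)
    show ?thesis
    proof (cases "m \<le> n")
      case True
      have e: "N - s = int (n - m)" using True N s by simp
      have "cN N (N - s) = of_nat (n choose (n - m)) * (-1) ^ (n - m)" by (subst e) (simp only: N cN_nat)
      also have "\<dots> = (-1) ^ n * (of_nat (n choose m) * (-1) ^ m)"
        using True by (simp add: binomial_symmetric[OF True, symmetric] neg1_diff)
      also have "\<dots> = (-1) powi N * cN N s" by (simp only: pw) (simp only: N s cN_nat)
      finally show ?thesis using R by simp
    next
      case False
      have "cN N s = 0" using False by (simp only: N s cN_nat binomial_eq_0, simp)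
      moreover have "cN N (N - s) = 0" using False N s by (intro cN_negidx) simp
      ultimately show ?thesis using R by simp
    qed
  qed
next
  case False
  then obtain l where N: "N = - int l - 1" using that[of "nat (- N - 1)"] by simp
  have pw: "(-1::complex) powi N = (-1) ^ (l + 1)"
    by (cases "even l") (simp_all add: N power_int_minus power_int_diff)
  show ?thesis
  proof (cases "s \<ge> 0")
    case True
    then obtain m where s: "s = int m" by (metis nonneg_int_cases)
    have z: "cN N (N - s) = 0" using N s by (intro cN_negidx) simp
    have "cN N s = of_nat ((m + l) choose m)" by (simp only: N s cN_neg)
    moreover have "((1 + fls_X) powi (- s - 1)) $$ (- N - 1) = ((- of_nat m - 1 :: complex) gchoose l)"
      using N s by (simp add: b1_nth)
    moreover have "((- of_nat m - 1 :: complex) gchoose l) = (-1) ^ l * of_nat ((l + m) choose l)"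
      by (rule gch_neg)
    moreover have "(l + m) choose l = (m + l) choose m"
      by (metis add.commute binomial_symmetric add_diff_cancel_left' le_add1)
    ultimately show ?thesis using z pw by simp
  next
    case False
    then obtain m where s: "s = - int m - 1" using that[of "nat (- s - 1)"] by simp
    have z: "cN N s = 0" using s by (intro cN_negidx) simp
    have e1: "- s - 1 = int m" "- N - 1 = int l" using N s by simp_all
    have R: "((1 + fls_X :: complex fls) powi (- s - 1)) $$ (- N - 1) = of_nat (m choose l)"
      unfolding e1 b1_nth by (simp add: binomial_gbinomial)
    show ?thesis
    proof (cases "l \<le> m")
      case True
      have e: "N - s = int (m - l)" using True N s by simp
      have "cN N (N - s) = of_nat ((m - l + l) choose (m - l))" by (subst e) (simp only: N cN_neg)
      also have "\<dots> = of_nat (m choose l)" using True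
        by (simp add: binomial_symmetric[OF True, symmetric])
      finally show ?thesis using z R by simp
    next
      case False
      have "cN N (N - s) = 0" using False N s by (intro cN_negidx) simp
      then show ?thesis using z R False by simp
    qed
  qed
qed


lemma Sum_any_graph2:
  assumes "\<And>a b. a \<noteq> \<phi> b \<Longrightarrow> F (a, b) = (0::'c::comm_monoid_add)"
  shows "Sum_any F = Sum_any (\<lambda>b. F (\<phi> b, b))"
proof -
  let ?g = "\<lambda>b. (\<phi> b, b)"
  have inj: "inj ?g" by (rule injI) simp
  have T: "{x. F x \<noteq> 0} = ?g ` {b. F (\<phi> b, b) \<noteq> 0}"
  proof
    show "{x. F x \<noteq> 0} \<subseteq> ?g ` {b. F (\<phi> b, b) \<noteq> 0}"
    proof
      fix x assume x: "x \<in> {x. F x \<noteq> 0}"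
      obtain a b where ab: "x = (a, b)" by (cases x)
      then have "a = \<phi> b" using x assms[of a b] by auto
      then show "x \<in> ?g ` {b. F (\<phi> b, b) \<noteq> 0}" using x ab by auto
    qed
  next
    show "?g ` {b. F (\<phi> b, b) \<noteq> 0} \<subseteq> {x. F x \<noteq> 0}" by auto
  qed
  show ?thesis
  proof (cases "finite {b. F (\<phi> b, b) \<noteq> 0}")
    case True
    then have "Sum_any F = sum F (?g ` {b. F (\<phi> b, b) \<noteq> 0})"
      using T by (intro Sum_any.expand_superset) auto
    also have "\<dots> = sum (F \<circ> ?g) {b. F (\<phi> b, b) \<noteq> 0}"
      by (rule sum.reindex) (rule inj_on_subset[OF inj subset_UNIV])
    also have "\<dots> = sum (\<lambda>b. F (\<phi> b, b)) {b. F (\<phi> b, b) \<noteq> 0}" by (simp add: o_def)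
    also have "\<dots> = Sum_any (\<lambda>b. F (\<phi> b, b))"
      using True by (intro Sum_any.expand_superset[symmetric]) auto
    finally show ?thesis .
  next
    case False
    have "infinite (?g ` {b. F (\<phi> b, b) \<noteq> 0})"
      using False finite_imageD inj_on_subset[OF inj subset_UNIV] by blast
    then have "infinite {x. F x \<noteq> 0}" using T by simp
    then show ?thesis using False by (simp add: Sum_any.infinite)
  qed
qed
lemma Sum_any_graph1:
  assumes "\<And>a b. b \<noteq> \<psi> a \<Longrightarrow> F (a, b) = (0::'c::comm_monoid_add)"
  shows "Sum_any F = Sum_any (\<lambda>a. F (a, \<psi> a))"
proof -
  have "Sum_any F = Sum_any (F \<circ> prod.swap)"
    by (rule Sum_any.reindex_cong[of prod.swap]) (auto simp: bij_def)
  also have "\<dots> = Sum_any (\<lambda>a. (F \<circ> prod.swap) (\<psi> a, a))"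
    by (rule Sum_any_graph2) (simp add: assms)
  finally show ?thesis by simp
qed

lemma Sum_any_shift: "Sum_any (\<lambda>i. h (i + c)) = Sum_any (h :: int \<Rightarrow> 'c::comm_monoid_add)"
  by (rule sym, rule Sum_any.reindex_cong[of "\<lambda>i. i + c"]) (auto simp: bij_plus_right o_def)

lemma Sum_any_flip: "Sum_any (\<lambda>i. h (c - i)) = Sum_any (h :: int \<Rightarrow> 'c::comm_monoid_add)"
  by (rule sym, rule Sum_any.reindex_cong[of "(-) c"]) (auto simp: bij_diff o_def)

context vector_space
begin

lemma Sum_any_scale_right:
  assumes "finite I" "\<And>i. i \<notin> I \<Longrightarrow> v i = 0"
  shows "scale c (Sum_any v) = Sum_any (\<lambda>i. scale c (v i))"
proof -
  have "Sum_any v = sum v I" using assms by (intro Sum_any.expand_superset) auto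
  moreover have "Sum_any (\<lambda>i. scale c (v i)) = sum (\<lambda>i. scale c (v i)) I"
    using assms by (intro Sum_any.expand_superset) auto
  ultimately show ?thesis by (simp add: scale_sum_right)
qed

lemma W_swap:
  assumes fI: "finite I" and fJ: "finite J"
    and B: "\<And>i j. f i * g i j \<noteq> 0 \<Longrightarrow> v j \<noteq> 0 \<Longrightarrow> i \<in> I \<and> j \<in> J"
  shows "Sum_any (\<lambda>i. scale (f i) (Sum_any (\<lambda>j. scale (g i j) (v j))))
       = Sum_any (\<lambda>j. scale (Sum_any (\<lambda>i. f i * g i j)) (v j))"
proof -
  have L: "scale (f i) (Sum_any (\<lambda>j. scale (g i j) (v j))) = (\<Sum>j\<in>J. scale (f i * g i j) (v j))" for i
  proof (cases "f i = 0")
    case True then show ?thesis by simp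
  next
    case False
    have "Sum_any (\<lambda>j. scale (g i j) (v j)) = (\<Sum>j\<in>J. scale (g i j) (v j))"
    proof (rule Sum_any.expand_superset[OF fJ])
      show "{j. scale (g i j) (v j) \<noteq> 0} \<subseteq> J" using B False by auto
    qed
    then show ?thesis by (simp add: scale_sum_right)
  qed
  have L0: "i \<notin> I \<Longrightarrow> (\<Sum>j\<in>J. scale (f i * g i j) (v j)) = 0" for i
    using B by (intro sum.neutral) auto
  have R: "scale (Sum_any (\<lambda>i. f i * g i j)) (v j) = (\<Sum>i\<in>I. scale (f i * g i j) (v j))" for j
  proof (cases "v j = 0")
    case True then show ?thesis by simp
  next
    case False
    have "Sum_any (\<lambda>i. f i * g i j) = (\<Sum>i\<in>I. f i * g i j)"
    proof (rule Sum_any.expand_superset[OF fI])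
      show "{i. f i * g i j \<noteq> 0} \<subseteq> I" using B False by auto
    qed
    then show ?thesis by (simp add: scale_sum_left)
  qed
  have R0: "j \<notin> J \<Longrightarrow> (\<Sum>i\<in>I. scale (f i * g i j) (v j)) = 0" for j
    using B by (intro sum.neutral) auto
  have "Sum_any (\<lambda>i. scale (f i) (Sum_any (\<lambda>j. scale (g i j) (v j))))
      = (\<Sum>i\<in>I. \<Sum>j\<in>J. scale (f i * g i j) (v j))"
    unfolding L using L0 by (intro Sum_any.expand_superset[OF fI]) auto
  also have "\<dots> = (\<Sum>j\<in>J. \<Sum>i\<in>I. scale (f i * g i j) (v j))" by (rule sum.swap)
  also have "\<dots> = Sum_any (\<lambda>j. scale (Sum_any (\<lambda>i. f i * g i j)) (v j))"
    unfolding R using R0 by (intro Sum_any.expand_superset[symmetric, OF fJ]) auto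
  finally show ?thesis .
qed

end

locale cvs = vector_space scale for scale :: "complex \<Rightarrow> 'b::ab_group_add \<Rightarrow> 'b"
begin

lemma cN_nz: "cN n i \<noteq> 0 \<Longrightarrow> 0 \<le> i"
  using cN_negidx by force

lemma Sum_any_scale_const:
  assumes "finite I" "\<And>i. i \<notin> I \<Longrightarrow> scale (f i) (v i) = 0"
  shows "Sum_any (\<lambda>i. scale (c * f i) (v i)) = scale c (Sum_any (\<lambda>i. scale (f i) (v i)))"
  using Sum_any_scale_right[of I "\<lambda>i. scale (f i) (v i)" c] assms by simp

lemma L_T1:
  fixes \<alpha> \<Phi> :: "int \<Rightarrow> 'b"
  assumes aT: "\<And>t. t > TA \<Longrightarrow> \<alpha> t = 0"
    and Phi: "\<And>t. \<Phi> t = Sum_any (\<lambda>l. scale (cN (int k) l) (\<alpha> (t - int k + l)))"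
  shows "Sum_any (\<lambda>i. scale (cN n i) (\<alpha> (x + i)))
       = Sum_any (\<lambda>i. scale (cN (n - int k) i) (\<Phi> (x + int k + i)))"
proof -
  have P: "\<Phi> (x + int k + i) = Sum_any (\<lambda>u. scale (cN (int k) (u - i)) (\<alpha> (x + u)))" for i
    unfolding Phi
    using Sum_any_shift[of "\<lambda>u. scale (cN (int k) (u - i)) (\<alpha> (x + u))" i]
    by (simp add: algebra_simps)
  have "Sum_any (\<lambda>i. scale (cN (n - int k) i) (\<Phi> (x + int k + i)))
      = Sum_any (\<lambda>i. scale (cN (n - int k) i) (Sum_any (\<lambda>u. scale (cN (int k) (u - i)) (\<alpha> (x + u)))))"
    by (simp only: P)
  also have "\<dots> = Sum_any (\<lambda>u. scale (Sum_any (\<lambda>i. cN (n - int k) i * cN (int k) (u - i))) (\<alpha> (x + u)))"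
  proof (rule W_swap[of "{0..TA - x}" "{0..TA - x}"])
    fix i u assume nz: "cN (n - int k) i * cN (int k) (u - i) \<noteq> 0" and a: "\<alpha> (x + u) \<noteq> 0"
    have "0 \<le> i" using nz cN_nz[of "n - int k" i] by auto
    moreover have "0 \<le> u - i" using nz cN_nz[of "int k" "u - i"] by auto
    moreover have "x + u \<le> TA" using a aT[of "x + u"] by force
    ultimately show "i \<in> {0..TA - x} \<and> u \<in> {0..TA - x}" by auto
  qed auto
  also have "\<dots> = Sum_any (\<lambda>u. scale (cN n u) (\<alpha> (x + u)))"
    by (simp add: Vand)
  finally show ?thesis by simp
qed

lemma Phi_rev:
  fixes \<beta> :: "int \<Rightarrow> 'b"
  shows "Sum_any (\<lambda>l. scale (cN (int k) l) (\<beta> (t - int k + l)))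
       = scale ((-1) ^ k) (Sum_any (\<lambda>l. scale (cN (int k) l) (\<beta> (t - l))))"
proof -
  have "Sum_any (\<lambda>l. scale (cN (int k) l) (\<beta> (t - int k + l)))
      = Sum_any (\<lambda>l. scale (cN (int k) (int k - l)) (\<beta> (t - l)))"
    using Sum_any_flip[of "\<lambda>l. scale (cN (int k) l) (\<beta> (t - int k + l))" "int k"]
    by (simp add: algebra_simps)
  also have "\<dots> = Sum_any (\<lambda>l. scale ((-1) ^ k * cN (int k) l) (\<beta> (t - l)))"
    by (simp only: cN_sym)
  also have "\<dots> = scale ((-1) ^ k) (Sum_any (\<lambda>l. scale (cN (int k) l) (\<beta> (t - l))))"
  proof (rule Sum_any_scale_const[of "{0..int k}"])
    fix i assume "i \<notin> {0..int k}"
    then have "cN (int k) i = 0"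
      by (cases "i < 0") (auto simp: cN_negidx cN_def binomial_gbinomial[symmetric] intro!: binomial_eq_0 split: if_splits)
    then show "scale (cN (int k) i) (\<beta> (t - i)) = 0" by simp
  qed simp
  finally show ?thesis .
qed

lemma L_T2:
  fixes \<beta> \<Phi> :: "int \<Rightarrow> 'b"
  assumes bM: "\<And>t. t < M \<Longrightarrow> \<beta> t = 0"
    and Phi: "\<And>t. \<Phi> t = Sum_any (\<lambda>l. scale (cN (int k) l) (\<beta> (t - int k + l)))"
  shows "scale ((-1) ^ k) (Sum_any (\<lambda>i. scale (cN n i) (\<beta> (m - i))))
       = Sum_any (\<lambda>i. scale (cN (n - int k) i) (\<Phi> (m - i)))"
proof -
  have P: "\<Phi> (m - i) = scale ((-1) ^ k) (Sum_any (\<lambda>u. scale (cN (int k) (u - i)) (\<beta> (m - u))))" for i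
    unfolding Phi Phi_rev
    using Sum_any_shift[of "\<lambda>u. scale (cN (int k) (u - i)) (\<beta> (m - u))" i]
    by (simp add: algebra_simps)
  have "Sum_any (\<lambda>i. scale (cN (n - int k) i) (\<Phi> (m - i)))
      = Sum_any (\<lambda>i. scale (cN (n - int k) i) (scale ((-1) ^ k) (Sum_any (\<lambda>u. scale (cN (int k) (u - i)) (\<beta> (m - u))))))"
    by (simp only: P)
  also have "\<dots> = scale ((-1) ^ k) (Sum_any (\<lambda>i. scale (cN (n - int k) i) (Sum_any (\<lambda>u. scale (cN (int k) (u - i)) (\<beta> (m - u))))))"
  proof -
    have "\<And>i. scale (cN (n - int k) i) (scale ((-1) ^ k) (Sum_any (\<lambda>u. scale (cN (int k) (u - i)) (\<beta> (m - u)))))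
        = scale ((-1) ^ k * cN (n - int k) i) (Sum_any (\<lambda>u. scale (cN (int k) (u - i)) (\<beta> (m - u))))"
      by (simp add: mult.commute)
    moreover have "scale (cN (n - int k) i) (Sum_any (\<lambda>u. scale (cN (int k) (u - i)) (\<beta> (m - u)))) = 0"
      if "i \<notin> {0..m - M}" for i
    proof (cases "i < 0")
      case True then show ?thesis by (simp add: cN_negidx)
    next
      case False
      then have "i > m - M" using that by auto
      have z: "(\<lambda>u. scale (cN (int k) (u - i)) (\<beta> (m - u))) = (\<lambda>u. 0)"
      proof (rule ext)
        fix u show "scale (cN (int k) (u - i)) (\<beta> (m - u)) = 0"
        proof (cases "u - i < 0")
          case True then show ?thesis by (simp add: cN_negidx)
        next
          case False
          then have "m - u < M" using \<open>i > m - M\<close> by auto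
          then show ?thesis by (simp add: bM)
        qed
      qed
      show ?thesis unfolding z by simp
    qed
    ultimately show ?thesis
      by (simp only:) (rule Sum_any_scale_const[of "{0..m - M}"], auto)
  qed
  also have "Sum_any (\<lambda>i. scale (cN (n - int k) i) (Sum_any (\<lambda>u. scale (cN (int k) (u - i)) (\<beta> (m - u)))))
        = Sum_any (\<lambda>u. scale (Sum_any (\<lambda>i. cN (n - int k) i * cN (int k) (u - i))) (\<beta> (m - u)))"
  proof (rule W_swap[of "{0..m - M}" "{0..m - M}"])
    fix i u assume nz: "cN (n - int k) i * cN (int k) (u - i) \<noteq> 0" and b: "\<beta> (m - u) \<noteq> 0"
    have "0 \<le> i" using nz cN_nz[of "n - int k" i] by auto
    moreover have "0 \<le> u - i" using nz cN_nz[of "int k" "u - i"] by auto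
    moreover have "M \<le> m - u" using b bM[of "m - u"] by force
    ultimately show "i \<in> {0..m - M} \<and> u \<in> {0..m - M}" by auto
  qed auto
  also have "\<dots> = Sum_any (\<lambda>u. scale (cN n u) (\<beta> (m - u)))"
    by (simp add: Vand)
  finally show ?thesis by simp
qed


lemma Sum_any_fin:
  fixes Lo Hi :: int
  assumes fin: "\<And>t. t \<notin> {Lo..Hi} \<Longrightarrow> \<Phi> t = 0"
  shows "Sum_any (\<lambda>t. scale (f t) (\<Phi> t)) = (\<Sum>t\<in>{Lo..Hi}. scale (f t) (\<Phi> t))"
proof (rule Sum_any.expand_superset)
  show "{a. scale (f a) (\<Phi> a) \<noteq> 0} \<subseteq> {Lo..Hi}"
  proof
    fix x assume "x \<in> {a. scale (f a) (\<Phi> a) \<noteq> 0}"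
    then have "\<Phi> x \<noteq> 0" by auto
    then show "x \<in> {Lo..Hi}" using fin by blast
  qed
qed simp

lemma L_S:
  fixes \<Phi> :: "int \<Rightarrow> 'b" and Lo Hi :: int
  assumes fin: "\<And>t. t \<notin> {Lo..Hi} \<Longrightarrow> \<Phi> t = 0"
  shows "Sum_any (\<lambda>i. scale (cN N i) (\<Phi> (m - N + i))) - scale ((-1) powi N) (Sum_any (\<lambda>i. scale (cN N i) (\<Phi> (m - i))))
       = Sum_any (\<lambda>t. scale (((1 + fls_X) powi (t - m - 1)) $$ (- N - 1)) (\<Phi> t))"
proof -
  have 1: "Sum_any (\<lambda>i. scale (cN N i) (\<Phi> (m - N + i))) = Sum_any (\<lambda>t. scale (cN N (t - m + N)) (\<Phi> t))"
    using Sum_any_shift[of "\<lambda>t. scale (cN N (t - m + N)) (\<Phi> t)" "m - N"] by (simp add: algebra_simps)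
  have 2: "Sum_any (\<lambda>i. scale (cN N i) (\<Phi> (m - i))) = Sum_any (\<lambda>t. scale (cN N (m - t)) (\<Phi> t))"
    using Sum_any_flip[of "\<lambda>t. scale (cN N (m - t)) (\<Phi> t)" m] by simp
  have "Sum_any (\<lambda>i. scale (cN N i) (\<Phi> (m - N + i))) - scale ((-1) powi N) (Sum_any (\<lambda>i. scale (cN N i) (\<Phi> (m - i))))
      = (\<Sum>t\<in>{Lo..Hi}. scale (cN N (t - m + N)) (\<Phi> t)) - scale ((-1) powi N) (\<Sum>t\<in>{Lo..Hi}. scale (cN N (m - t)) (\<Phi> t))"
    unfolding 1 2 by (simp only: Sum_any_fin[OF fin])
  also have "\<dots> = (\<Sum>t\<in>{Lo..Hi}. scale (cN N (t - m + N) - (-1) powi N * cN N (m - t)) (\<Phi> t))"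
    by (simp add: scale_sum_right sum_subtractf scale_left_diff_distrib)
  also have "\<dots> = (\<Sum>t\<in>{Lo..Hi}. scale (((1 + fls_X) powi (t - m - 1)) $$ (- N - 1)) (\<Phi> t))"
  proof (rule sum.cong[OF refl])
    fix t
    have "cN N (t - m + N) - (-1) powi N * cN N (m - t) = ((1 + fls_X) powi (- (m - t) - 1)) $$ (- N - 1)"
      using dd_id[of N "m - t"] by (simp add: algebra_simps)
    then show "scale (cN N (t - m + N) - (-1) powi N * cN N (m - t)) (\<Phi> t) = scale (((1 + fls_X) powi (t - m - 1)) $$ (- N - 1)) (\<Phi> t)"
      by (simp add: algebra_simps)
  qed
  also have "\<dots> = Sum_any (\<lambda>t. scale (((1 + fls_X) powi (t - m - 1)) $$ (- N - 1)) (\<Phi> t))"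
    by (simp only: Sum_any_fin[OF fin])
  finally show ?thesis .
qed


lemma Epow_nz: "(ElF powi s) $$ j \<noteq> 0 \<Longrightarrow> s \<le> j"
  using powi_below[OF EE_0 EE_1', of j s] by force
lemma Lpow_nz: "(LlF powi j) $$ s \<noteq> 0 \<Longrightarrow> j \<le> s"
  using powi_below[OF LL_0 LL_1', of s j] by force
lemma ElF_nz: "ElF \<noteq> 0" using EE_nz by simp
lemma K_nz: "(ElF powi (- int k) * Et t) $$ j \<noteq> 0 \<Longrightarrow> - int k \<le> j"
proof (rule ccontr)
  assume a: "(ElF powi (- int k) * Et t) $$ j \<noteq> 0" "\<not> - int k \<le> j"
  have s1: "fls_subdegree ElF = 1" using subdeg1[OF EE_0 EE_1'] .
  have "fls_subdegree (ElF powi (- int k)) = - int k" by (simp add: s1)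
  moreover have "fls_subdegree (Et t) \<ge> 0" by (simp add: Et_def fls_subdegree_fls_to_fps_gt0)
  ultimately have "j < fls_subdegree (ElF powi (- int k)) + fls_subdegree (Et t)" using a(2) by linarith
  then show False using a fls_times_nth_eq0 by blast
qed
lemma Et_nz: "Et t $$ j \<noteq> 0 \<Longrightarrow> 0 \<le> j" by (auto simp: Et_nth split: if_splits)
lemma b1_nz: "((1 + fls_X :: complex fls) powi t) $$ s \<noteq> 0 \<Longrightarrow> 0 \<le> s" by (auto simp: b1_nth split: if_splits)

lemma Sum_any_delta_scale: "Sum_any (\<lambda>u. scale (if u = a then 1 else 0) (v u)) = v a"
proof -
  have e: "(\<lambda>u. scale (if u = a then 1 else 0) (v u)) = (\<lambda>u. if u = a then v u else 0)" by auto
  show ?thesis unfolding e by simp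
qed

lemma Sum_any_delta_scale': "Sum_any (\<lambda>u. scale (if a = u then 1 else 0) (v u)) = v a"
proof -
  have e: "(\<lambda>u. scale (if a = u then 1 else 0) (v u)) = (\<lambda>u. if u = a then v u else 0)" by auto
  show ?thesis unfolding e by simp
qed

lemma gamma_from_H:
  fixes \<gamma> :: "int \<Rightarrow> 'b" and J :: int
  assumes gJ: "\<And>j. j < J \<Longrightarrow> \<gamma> j = 0"
  shows "\<gamma> j = Sum_any (\<lambda>i. scale ((ElF powi (- int k)) $$ i)
                  (Sum_any (\<lambda>l. scale ((ElF powi int k) $$ l) (\<gamma> (j - i - l)))))"
proof -
  have P: "Sum_any (\<lambda>l. scale ((ElF powi int k) $$ l) (\<gamma> (j - i - l)))
         = Sum_any (\<lambda>u. scale ((ElF powi int k) $$ (u - i)) (\<gamma> (j - u)))" for i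
    using Sum_any_shift[of "\<lambda>u. scale ((ElF powi int k) $$ (u - i)) (\<gamma> (j - u))" i]
    by (simp add: algebra_simps)
  have "Sum_any (\<lambda>i. scale ((ElF powi (- int k)) $$ i) (Sum_any (\<lambda>l. scale ((ElF powi int k) $$ l) (\<gamma> (j - i - l)))))
      = Sum_any (\<lambda>i. scale ((ElF powi (- int k)) $$ i) (Sum_any (\<lambda>u. scale ((ElF powi int k) $$ (u - i)) (\<gamma> (j - u)))))"
    by (simp only: P)
  also have "\<dots> = Sum_any (\<lambda>u. scale (Sum_any (\<lambda>i. (ElF powi (- int k)) $$ i * (ElF powi int k) $$ (u - i))) (\<gamma> (j - u)))"
  proof (rule W_swap[of "{- int k..j - J - int k}" "{0..j - J}"])
    fix i u assume nz: "(ElF powi (- int k)) $$ i * (ElF powi int k) $$ (u - i) \<noteq> 0" and g: "\<gamma> (j - u) \<noteq> 0"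
    have "- int k \<le> i" using nz Epow_nz[of "- int k" i] by auto
    moreover have "int k \<le> u - i" using nz Epow_nz[of "int k" "u - i"] by auto
    moreover have "J \<le> j - u" using g gJ[of "j - u"] by force
    ultimately show "i \<in> {- int k..j - J - int k} \<and> u \<in> {0..j - J}" by auto
  qed auto
  also have "\<dots> = Sum_any (\<lambda>u. scale ((ElF powi (- int k) * ElF powi int k) $$ u) (\<gamma> (j - u)))"
    by (simp only: fls_times_nth_Sum_any)
  also have "ElF powi (- int k) * ElF powi int k = 1"
    using ElF_nz by (simp add: power_int_minus)
  also have "Sum_any (\<lambda>u. scale ((1::complex fls) $$ u) (\<gamma> (j - u))) = \<gamma> j"
    using Sum_any_delta_scale[of 0 "\<lambda>u. \<gamma> (j - u)"] by simp
  finally show ?thesis ..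
qed

lemma gamma_from_G:
  fixes \<gamma> :: "int \<Rightarrow> 'b" and J :: int
  assumes gJ: "\<And>j. j < J \<Longrightarrow> \<gamma> j = 0"
  shows "\<gamma> j = Sum_any (\<lambda>s. scale ((ElF powi s) $$ j) (Sum_any (\<lambda>j'. scale ((LlF powi j') $$ s) (\<gamma> j'))))"
proof -
  have "Sum_any (\<lambda>s. scale ((ElF powi s) $$ j) (Sum_any (\<lambda>j'. scale ((LlF powi j') $$ s) (\<gamma> j'))))
      = Sum_any (\<lambda>j'. scale (Sum_any (\<lambda>s. (ElF powi s) $$ j * (LlF powi j') $$ s)) (\<gamma> j'))"
  proof (rule W_swap[of "{J..j}" "{J..j}"])
    fix s j' assume nz: "(ElF powi s) $$ j * (LlF powi j') $$ s \<noteq> 0" and g: "\<gamma> j' \<noteq> 0"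
    have "s \<le> j" using nz Epow_nz[of s j] by auto
    moreover have "j' \<le> s" using nz Lpow_nz[of j' s] by auto
    moreover have "J \<le> j'" using g gJ[of j'] by force
    ultimately show "s \<in> {J..j} \<and> j' \<in> {J..j}" by auto
  qed auto
  also have "\<dots> = Sum_any (\<lambda>j'. scale (if j = j' then 1 else 0) (\<gamma> j'))"
  proof -
    have "Sum_any (\<lambda>s. (ElF powi s) $$ j * (LlF powi j') $$ s) = (if j = j' then 1 else 0)" for j'
      using inv1[of j' j] by (simp only: mult.commute)
    then show ?thesis by (simp only:)
  qed
  also have "\<dots> = \<gamma> j" by (rule Sum_any_delta_scale')
  finally show ?thesis ..
qed


lemma gamma_K_of_P1:
  fixes \<gamma> \<Phi> :: "int \<Rightarrow> 'b" and J Lo Hi :: int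
  assumes gJ: "\<And>j. j < J \<Longrightarrow> \<gamma> j = 0"
    and fin: "\<And>t. t \<notin> {Lo..Hi} \<Longrightarrow> \<Phi> t = 0"
    and P1: "\<And>j. Sum_any (\<lambda>t. scale (Et t $$ j) (\<Phi> t)) = Sum_any (\<lambda>l. scale ((ElF powi int k) $$ l) (\<gamma> (j - l)))"
  shows "\<gamma> j = Sum_any (\<lambda>t. scale ((ElF powi (- int k) * Et t) $$ j) (\<Phi> t))"
proof -
  have "\<gamma> j = Sum_any (\<lambda>i. scale ((ElF powi (- int k)) $$ i)
                  (Sum_any (\<lambda>l. scale ((ElF powi int k) $$ l) (\<gamma> (j - i - l)))))"
    by (rule gamma_from_H[OF gJ])
  also have "\<dots> = Sum_any (\<lambda>i. scale ((ElF powi (- int k)) $$ i) (Sum_any (\<lambda>t. scale (Et t $$ (j - i)) (\<Phi> t))))"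
    by (simp only: P1)
  also have "\<dots> = Sum_any (\<lambda>t. scale (Sum_any (\<lambda>i. (ElF powi (- int k)) $$ i * Et t $$ (j - i))) (\<Phi> t))"
  proof (rule W_swap[of "{- int k..j}" "{Lo..Hi}"])
    fix i t assume nz: "(ElF powi (- int k)) $$ i * Et t $$ (j - i) \<noteq> 0" and g: "\<Phi> t \<noteq> 0"
    have "- int k \<le> i" using nz Epow_nz[of "- int k" i] by auto
    moreover have "0 \<le> j - i" using nz Et_nz[of t "j - i"] by auto
    moreover have "t \<in> {Lo..Hi}" using g fin by blast
    ultimately show "i \<in> {- int k..j} \<and> t \<in> {Lo..Hi}" by auto
  qed auto
  also have "\<dots> = Sum_any (\<lambda>t. scale ((ElF powi (- int k) * Et t) $$ j) (\<Phi> t))"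
    by (simp only: fls_times_nth_Sum_any)
  finally show ?thesis .
qed

lemma P2_of_gammaK:
  fixes \<gamma> \<Phi> :: "int \<Rightarrow> 'b" and Lo Hi :: int
  assumes fin: "\<And>t. t \<notin> {Lo..Hi} \<Longrightarrow> \<Phi> t = 0"
    and gK: "\<And>j. \<gamma> j = Sum_any (\<lambda>t. scale ((ElF powi (- int k) * Et t) $$ j) (\<Phi> t))"
  shows "Sum_any (\<lambda>j. scale ((LlF powi j) $$ s) (\<gamma> j))
       = Sum_any (\<lambda>t. scale (((1 + fls_X) powi t) $$ (s + int k)) (\<Phi> t))"
proof -
  have "Sum_any (\<lambda>j. scale ((LlF powi j) $$ s) (\<gamma> j))
      = Sum_any (\<lambda>j. scale ((LlF powi j) $$ s) (Sum_any (\<lambda>t. scale ((ElF powi (- int k) * Et t) $$ j) (\<Phi> t))))"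
    by (simp only: gK[symmetric])
  also have "\<dots> = Sum_any (\<lambda>t. scale (Sum_any (\<lambda>j. (LlF powi j) $$ s * (ElF powi (- int k) * Et t) $$ j)) (\<Phi> t))"
  proof (rule W_swap[of "{- int k..s}" "{Lo..Hi}"])
    fix j t assume nz: "(LlF powi j) $$ s * (ElF powi (- int k) * Et t) $$ j \<noteq> 0" and g: "\<Phi> t \<noteq> 0"
    have "j \<le> s" using nz Lpow_nz[of j s] by auto
    moreover have "- int k \<le> j" using nz K_nz[of k t j] by auto
    moreover have "t \<in> {Lo..Hi}" using g fin by blast
    ultimately show "j \<in> {- int k..s} \<and> t \<in> {Lo..Hi}" by auto
  qed auto
  also have "\<dots> = Sum_any (\<lambda>t. scale (((1 + fls_X) powi t) $$ (s + int k)) (\<Phi> t))"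
  proof -
    have "Sum_any (\<lambda>j. (LlF powi j) $$ s * (ElF powi (- int k) * Et t) $$ j) = ((1 + fls_X) powi t) $$ (s + int k)" for t
      using S7[of "int k" t s] by (simp only: mult.commute)
    then show ?thesis by (simp only:)
  qed
  finally show ?thesis .
qed

lemma gamma_K_of_P2:
  fixes \<gamma> \<Phi> :: "int \<Rightarrow> 'b" and J Lo Hi :: int
  assumes gJ: "\<And>j. j < J \<Longrightarrow> \<gamma> j = 0"
    and fin: "\<And>t. t \<notin> {Lo..Hi} \<Longrightarrow> \<Phi> t = 0"
    and P2: "\<And>s. Sum_any (\<lambda>j. scale ((LlF powi j) $$ s) (\<gamma> j))
       = Sum_any (\<lambda>t. scale (((1 + fls_X) powi t) $$ (s + int k)) (\<Phi> t))"
  shows "\<gamma> j = Sum_any (\<lambda>t. scale ((ElF powi (- int k) * Et t) $$ j) (\<Phi> t))"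
proof -
  have "\<gamma> j = Sum_any (\<lambda>s. scale ((ElF powi s) $$ j) (Sum_any (\<lambda>j'. scale ((LlF powi j') $$ s) (\<gamma> j'))))"
    by (rule gamma_from_G[OF gJ])
  also have "\<dots> = Sum_any (\<lambda>s. scale ((ElF powi s) $$ j) (Sum_any (\<lambda>t. scale (((1 + fls_X) powi t) $$ (s + int k)) (\<Phi> t))))"
    by (simp only: P2)
  also have "\<dots> = Sum_any (\<lambda>t. scale (Sum_any (\<lambda>s. (ElF powi s) $$ j * ((1 + fls_X) powi t) $$ (s + int k))) (\<Phi> t))"
  proof (rule W_swap[of "{- int k..j}" "{Lo..Hi}"])
    fix s t assume nz: "(ElF powi s) $$ j * ((1 + fls_X) powi t) $$ (s + int k) \<noteq> 0" and g: "\<Phi> t \<noteq> 0"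
    have "s \<le> j" using nz Epow_nz[of s j] by auto
    moreover have "0 \<le> s + int k" using nz b1_nz[of t "s + int k"] by auto
    moreover have "t \<in> {Lo..Hi}" using g fin by blast
    ultimately show "s \<in> {- int k..j} \<and> t \<in> {Lo..Hi}" by auto
  qed auto
  also have "\<dots> = Sum_any (\<lambda>t. scale ((ElF powi (- int k) * Et t) $$ j) (\<Phi> t))"
  proof -
    have "Sum_any (\<lambda>s. (ElF powi s) $$ j * ((1 + fls_X) powi t) $$ (s + int k)) = (ElF powi (- int k) * Et t) $$ j" for t
      using S8[of t "int k" j] by (simp only: mult.commute)
    then show ?thesis by (simp only:)
  qed
  finally show ?thesis .
qed

lemma P1_of_gammaK:
  fixes \<gamma> \<Phi> :: "int \<Rightarrow> 'b" and Lo Hi :: int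
  assumes fin: "\<And>t. t \<notin> {Lo..Hi} \<Longrightarrow> \<Phi> t = 0"
    and gK: "\<And>j. \<gamma> j = Sum_any (\<lambda>t. scale ((ElF powi (- int k) * Et t) $$ j) (\<Phi> t))"
  shows "Sum_any (\<lambda>l. scale ((ElF powi int k) $$ l) (\<gamma> (j - l))) = Sum_any (\<lambda>t. scale (Et t $$ j) (\<Phi> t))"
proof -
  have "Sum_any (\<lambda>l. scale ((ElF powi int k) $$ l) (\<gamma> (j - l)))
      = Sum_any (\<lambda>l. scale ((ElF powi int k) $$ l) (Sum_any (\<lambda>t. scale ((ElF powi (- int k) * Et t) $$ (j - l)) (\<Phi> t))))"
    by (simp only: gK[symmetric])
  also have "\<dots> = Sum_any (\<lambda>t. scale (Sum_any (\<lambda>l. (ElF powi int k) $$ l * (ElF powi (- int k) * Et t) $$ (j - l))) (\<Phi> t))"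
  proof (rule W_swap[of "{int k..j + int k}" "{Lo..Hi}"])
    fix l t assume nz: "(ElF powi int k) $$ l * (ElF powi (- int k) * Et t) $$ (j - l) \<noteq> 0" and g: "\<Phi> t \<noteq> 0"
    have "int k \<le> l" using nz Epow_nz[of "int k" l] by auto
    moreover have "- int k \<le> j - l" using nz K_nz[of k t "j - l"] by auto
    moreover have "t \<in> {Lo..Hi}" using g fin by blast
    ultimately show "l \<in> {int k..j + int k} \<and> t \<in> {Lo..Hi}" by auto
  qed auto
  also have "\<dots> = Sum_any (\<lambda>t. scale ((ElF powi int k * (ElF powi (- int k) * Et t)) $$ j) (\<Phi> t))"
    by (simp only: fls_times_nth_Sum_any)
  also have "\<dots> = Sum_any (\<lambda>t. scale (Et t $$ j) (\<Phi> t))"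
  proof -
    have "ElF powi int k * (ElF powi (- int k) * Et t) = Et t" for t
      using ElF_nz by (simp add: power_int_minus mult.assoc[symmetric])
    then show ?thesis by (simp only:)
  qed
  finally show ?thesis .
qed


lemma cN_big: "l > int k \<Longrightarrow> cN (int k) l = 0"
proof -
  assume "l > int k"
  then have "l = int (nat l)" "nat l > k" by auto
  then show ?thesis by (metis cN_nat binomial_eq_0 mult_zero_left of_nat_0)
qed

lemma S9: "Sum_any (\<lambda>s. ((1 + fls_X :: complex fls) powi a) $$ (r - s) * ((1 + fls_X) powi b) $$ (s + c))
     = ((1 + fls_X) powi (a + b)) $$ (r + c)"
proof -
  have nz: "(1 + fls_X :: complex fls) \<noteq> 0"
  proof
    assume "(1 + fls_X :: complex fls) = 0"
    then have "(1 + fls_X :: complex fls) $$ 0 = 0" by simp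
    then show False by simp
  qed
  have "((1 + fls_X) powi (a + b)) $$ (r + c) = ((1 + fls_X :: complex fls) powi a * (1 + fls_X) powi b) $$ (r + c)"
    using nz by (simp add: power_int_add)
  also have "\<dots> = Sum_any (\<lambda>i. ((1 + fls_X :: complex fls) powi a) $$ i * ((1 + fls_X) powi b) $$ (r + c - i))"
    by (rule fls_times_nth_Sum_any)
  also have "\<dots> = Sum_any (\<lambda>s. ((1 + fls_X :: complex fls) powi a) $$ (r - s) * ((1 + fls_X) powi b) $$ (s + c))"
    using Sum_any_flip[of "\<lambda>i. ((1 + fls_X :: complex fls) powi a) $$ i * ((1 + fls_X) powi b) $$ (r + c - i)" r]
    by (simp add: algebra_simps)
  finally show ?thesis ..
qed

lemma R_of_P2:
  fixes \<Phi> G :: "int \<Rightarrow> 'b" and Lo Hi :: int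
  assumes fin: "\<And>t. t \<notin> {Lo..Hi} \<Longrightarrow> \<Phi> t = 0"
    and P2: "\<And>s. G s = Sum_any (\<lambda>t. scale (((1 + fls_X) powi t) $$ (s + int k)) (\<Phi> t))"
  shows "Sum_any (\<lambda>s. scale (((1 + fls_X) powi a) $$ (r - s)) (G s))
       = Sum_any (\<lambda>t. scale (((1 + fls_X) powi (a + t)) $$ (r + int k)) (\<Phi> t))"
proof -
  have "Sum_any (\<lambda>s. scale (((1 + fls_X) powi a) $$ (r - s)) (G s))
     = Sum_any (\<lambda>s. scale (((1 + fls_X) powi a) $$ (r - s)) (Sum_any (\<lambda>t. scale (((1 + fls_X) powi t) $$ (s + int k)) (\<Phi> t))))"
    by (simp only: P2)
  also have "\<dots> = Sum_any (\<lambda>t. scale (Sum_any (\<lambda>s. ((1 + fls_X) powi a) $$ (r - s) * ((1 + fls_X) powi t) $$ (s + int k))) (\<Phi> t))"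
  proof (rule W_swap[of "{- int k..r}" "{Lo..Hi}"])
    fix s t assume nz: "((1 + fls_X :: complex fls) powi a) $$ (r - s) * ((1 + fls_X) powi t) $$ (s + int k) \<noteq> 0" and g: "\<Phi> t \<noteq> 0"
    have "0 \<le> r - s" using nz b1_nz[of a "r - s"] by auto
    moreover have "0 \<le> s + int k" using nz b1_nz[of t "s + int k"] by auto
    moreover have "t \<in> {Lo..Hi}" using g fin by blast
    ultimately show "s \<in> {- int k..r} \<and> t \<in> {Lo..Hi}" by auto
  qed auto
  also have "\<dots> = Sum_any (\<lambda>t. scale (((1 + fls_X) powi (a + t)) $$ (r + int k)) (\<Phi> t))"
    by (simp only: S9)
  finally show ?thesis .
qed

lemma R_zero:
  fixes \<gamma> :: "int \<Rightarrow> 'b" and J :: int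
  assumes gJ: "\<And>j. j < J \<Longrightarrow> \<gamma> j = 0" and rJ: "r < J"
  shows "Sum_any (\<lambda>s. scale (((1 + fls_X) powi a) $$ (r - s)) (Sum_any (\<lambda>j. scale ((LlF powi j) $$ s) (\<gamma> j)))) = 0"
proof -
  have "(\<lambda>s. scale (((1 + fls_X) powi a) $$ (r - s)) (Sum_any (\<lambda>j. scale ((LlF powi j) $$ s) (\<gamma> j)))) = (\<lambda>s. 0)"
  proof (rule ext)
    fix s show "scale (((1 + fls_X) powi a) $$ (r - s)) (Sum_any (\<lambda>j. scale ((LlF powi j) $$ s) (\<gamma> j))) = 0"
    proof (cases "r - s < 0")
      case True then show ?thesis by (simp add: b1_nth)
    next
      case False
      then have sJ: "s < J" using rJ by simp
      have z: "(\<lambda>j. scale ((LlF powi j) $$ s) (\<gamma> j)) = (\<lambda>j. 0)"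
      proof (rule ext)
        fix j show "scale ((LlF powi j) $$ s) (\<gamma> j) = 0"
        proof (cases "(LlF powi j) $$ s = 0")
          case False
          then have "j \<le> s" using Lpow_nz by blast
          then show ?thesis using sJ gJ[of j] by auto
        qed simp
      qed
      show ?thesis unfolding z by simp
    qed
  qed
  then show ?thesis by (simp only:) simp
qed

lemma core_S:
  fixes \<alpha> \<beta> \<Phi> :: "int \<Rightarrow> 'b" and TA M Lo Hi :: int
  assumes aT: "\<And>t. t > TA \<Longrightarrow> \<alpha> t = 0" and bM: "\<And>t. t < M \<Longrightarrow> \<beta> t = 0"
    and PhiA: "\<And>t. \<Phi> t = Sum_any (\<lambda>l. scale (cN (int k) l) (\<alpha> (t - int k + l)))"
    and PhiB: "\<And>t. \<Phi> t = Sum_any (\<lambda>l. scale (cN (int k) l) (\<beta> (t - int k + l)))"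
    and fin: "\<And>t. t \<notin> {Lo..Hi} \<Longrightarrow> \<Phi> t = 0"
  shows "Sum_any (\<lambda>i. scale (cN (- r - 1) i) (\<alpha> (m + r + 1 + i)))
         - Sum_any (\<lambda>i. scale ((-1) powi (- r - 1) * cN (- r - 1) i) (\<beta> (m - i)))
       = Sum_any (\<lambda>t. scale (((1 + fls_X) powi (t - m - 1)) $$ (r + int k)) (\<Phi> t))"
proof -
  define n where "n = - r - 1"
  define N where "N = n - int k"
  have 1: "Sum_any (\<lambda>i. scale (cN n i) (\<alpha> ((m - n) + i)))
         = Sum_any (\<lambda>i. scale (cN N i) (\<Phi> (m - N + i)))"
    using L_T1[OF aT PhiA, where n=n and x="m - n"] by (simp add: N_def algebra_simps)
  have 2: "scale ((-1) ^ k) (Sum_any (\<lambda>i. scale (cN n i) (\<beta> (m - i))))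
       = Sum_any (\<lambda>i. scale (cN N i) (\<Phi> (m - i)))"
    using L_T2[OF bM PhiB, where n=n and m=m] by (simp add: N_def)
  have 3: "Sum_any (\<lambda>i. scale ((-1) powi n * cN n i) (\<beta> (m - i)))
        = scale ((-1) powi n) (Sum_any (\<lambda>i. scale (cN n i) (\<beta> (m - i))))"
  proof (rule Sum_any_scale_const[of "{0..m - M}"])
    fix i assume "i \<notin> {0..m - M}"
    then show "scale (cN n i) (\<beta> (m - i)) = 0"
      by (cases "i < 0") (auto simp: cN_negidx bM)
  qed simp
  have pw: "(-1::complex) powi n = (-1) powi N * (-1) ^ k"
    by (cases "even k") (simp_all add: N_def power_int_diff)
  have 4: "scale ((-1) powi n) (Sum_any (\<lambda>i. scale (cN n i) (\<beta> (m - i))))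
         = scale ((-1) powi N) (Sum_any (\<lambda>i. scale (cN N i) (\<Phi> (m - i))))"
    unfolding 2[symmetric] pw by simp
  have "Sum_any (\<lambda>i. scale (cN n i) (\<alpha> (m + r + 1 + i))) - Sum_any (\<lambda>i. scale ((-1) powi n * cN n i) (\<beta> (m - i)))
      = Sum_any (\<lambda>i. scale (cN N i) (\<Phi> (m - N + i))) - scale ((-1) powi N) (Sum_any (\<lambda>i. scale (cN N i) (\<Phi> (m - i))))"
    using 1 3 4 by (simp add: n_def algebra_simps)
  also have "\<dots> = Sum_any (\<lambda>t. scale (((1 + fls_X) powi (t - m - 1)) $$ (- N - 1)) (\<Phi> t))"
    by (rule L_S[OF fin])
  also have "- N - 1 = r + int k" by (simp add: N_def n_def)
  finally show ?thesis by (simp add: n_def)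
qed

end

context cvs begin

lemma binom_xy_cN: "binom_xy n (n - i) i = cN n i"
  by (simp add: binom_xy_def cN_def)
lemma binom_yx_cN: "binom_yx n i (n - i) = cN n i"
  by (simp add: binom_yx_def cN_def)

lemma mult2_bxy: "mult2 scale (binom_xy n) g m p = Sum_any (\<lambda>i. scale (cN n i) (g (m - n + i) (p - i)))"
proof -
  have "mult2 scale (binom_xy n) g m p = Sum_any (\<lambda>b. (\<lambda>(a, b). scale (binom_xy n a b) (g (m - a) (p - b))) (n - b, b))"
    unfolding mult2_def
    by (rule Sum_any_graph2) (auto simp: binom_xy_def)
  also have "\<dots> = Sum_any (\<lambda>i. scale (cN n i) (g (m - n + i) (p - i)))"
    by (simp add: binom_xy_cN algebra_simps)
  finally show ?thesis .
qed

lemma dt1: "delta_term1 scale A w r m p = Sum_any (\<lambda>i. scale (cN (- r - 1) i) (A (m + r + 1 + i) (p - r - i) w))"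
proof -
  have "delta_term1 scale A w r m p = Sum_any (\<lambda>b. (\<lambda>(a, b). scale (shift_y r (binom_xy (- r - 1)) a b) (A (m - a) (p - b) w)) (- 1 - b, b))"
    unfolding delta_term1_def mult2_def
    by (rule Sum_any_graph2) (auto simp: binom_xy_def shift_y_def)
  also have "\<dots> = Sum_any (\<lambda>b. scale (binom_xy (- r - 1) (- 1 - b) (b - r)) (A (m + 1 + b) (p - b) w))"
    by (simp add: shift_y_def algebra_simps)
  also have "\<dots> = Sum_any (\<lambda>i. scale (binom_xy (- r - 1) (- 1 - (i + r)) (i + r - r)) (A (m + 1 + (i + r)) (p - (i + r)) w))"
    by (rule Sum_any_shift[symmetric])
  also have "\<dots> = Sum_any (\<lambda>i. scale (cN (- r - 1) i) (A (m + r + 1 + i) (p - r - i) w))"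
  proof -
    have "binom_xy (- r - 1) (- 1 - (i + r)) (i + r - r) = cN (- r - 1) i" for i
    proof -
      have e1: "- 1 - (i + r) = (- r - 1) - i" "i + r - r = i" by simp_all
      show ?thesis unfolding e1 by (rule binom_xy_cN)
    qed
    then show ?thesis by (simp add: algebra_simps)
  qed
  finally show ?thesis .
qed

lemma dt2: "delta_term2 scale B w r m p = Sum_any (\<lambda>i. scale ((-1) powi (- r - 1) * cN (- r - 1) i) (B (m - i) (p + 1 + i) w))"
proof -
  have "delta_term2 scale B w r m p = Sum_any (\<lambda>a. (\<lambda>(a, b). scale ((-1) powi (- r - 1) * shift_y r (binom_yx (- r - 1)) a b) (B (m - a) (p - b) w)) (a, - 1 - a))"
    unfolding delta_term2_def mult2_def
    by (rule Sum_any_graph1) (auto simp: binom_yx_def shift_y_def)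
  also have "\<dots> = Sum_any (\<lambda>i. scale ((-1) powi (- r - 1) * cN (- r - 1) i) (B (m - i) (p + 1 + i) w))"
  proof -
    have "binom_yx (- r - 1) i (- 1 - i - r) = cN (- r - 1) i" for i
    proof -
      have e1: "- 1 - i - r = (- r - 1) - i" by simp
      show ?thesis unfolding e1 by (rule binom_yx_cN)
    qed
    then show ?thesis by (simp add: shift_y_def algebra_simps)
  qed
  finally show ?thesis .
qed

lemma drhs: "delta_rhs scale C w r m p = Sum_any (\<lambda>s. scale (((1 + fls_X) powi (- m - 1)) $$ (r - s))
                 (Sum_any (\<lambda>j. scale ((LlF powi j) $$ s) (C j (p + m + 1) w))))"
  by (simp add: delta_rhs_def C_log_def log1p_fls_def LL_def Let_def algebra_simps)

lemma subst_eq: "subst_exp scale D j q = Sum_any (\<lambda>t. scale (Et t $$ j) (D t (q - t)))"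
proof (cases "j < 0")
  case True
  then have z: "(\<lambda>t. scale (Et t $$ j) (D t (q - t))) = (\<lambda>t. 0)" by (auto simp: Et_nth)
  show ?thesis unfolding z using True by (simp add: subst_exp_def)
next
  case False
  then show ?thesis by (simp add: subst_exp_def Et_nth)
qed

lemma exprhs_eq: "exp_rhs scale k C w j q = Sum_any (\<lambda>i. scale ((ElF powi int k) $$ i) (C (j - i) (q - int k) w))"
  by (simp add: exp_rhs_def Ek_eq)


lemma Phi_facts:
  fixes PA MB q :: int
  assumes PA: "\<forall>p<PA. \<forall>m. A m p w = 0" and MB: "\<forall>m<MB. \<forall>p. B m p w = 0"
    and c1: "\<And>m p. mult2 scale (binom_xy (int k)) (\<lambda>a b. A a b w) m p = mult2 scale (binom_xy (int k)) (\<lambda>a b. B a b w) m p"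
  shows "\<And>t. mult2 scale (binom_xy (int k)) (\<lambda>a b. A a b w) t (q + int k - t) = Sum_any (\<lambda>l. scale (cN (int k) l) (A (t - int k + l) (q - (t - int k + l)) w))"
    and "\<And>t. mult2 scale (binom_xy (int k)) (\<lambda>a b. A a b w) t (q + int k - t) = Sum_any (\<lambda>l. scale (cN (int k) l) (B (t - int k + l) (q - (t - int k + l)) w))"
    and "\<And>t. t \<notin> {MB..q - PA + int k} \<Longrightarrow> mult2 scale (binom_xy (int k)) (\<lambda>a b. A a b w) t (q + int k - t) = 0"
proof -
  show a: "mult2 scale (binom_xy (int k)) (\<lambda>a b. A a b w) t (q + int k - t) = Sum_any (\<lambda>l. scale (cN (int k) l) (A (t - int k + l) (q - (t - int k + l)) w))" for t
  proof -
    have e: "q - (t - int k + l) = q + int k - t - l" for l by simp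
    show ?thesis by (simp only: mult2_bxy e)
  qed
  show b: "mult2 scale (binom_xy (int k)) (\<lambda>a b. A a b w) t (q + int k - t) = Sum_any (\<lambda>l. scale (cN (int k) l) (B (t - int k + l) (q - (t - int k + l)) w))" for t
  proof -
    have e: "q - (t - int k + l) = q + int k - t - l" for l by simp
    show ?thesis by (simp only: c1) (simp only: mult2_bxy e)
  qed
  fix t assume t: "t \<notin> {MB..q - PA + int k}"
  then show "mult2 scale (binom_xy (int k)) (\<lambda>a b. A a b w) t (q + int k - t) = 0"
  proof (cases "t < MB")
    case True
    have z: "(\<lambda>l. scale (cN (int k) l) (B (t - int k + l) (q - (t - int k + l)) w)) = (\<lambda>l. 0)"
    proof (rule ext)
      fix l show "scale (cN (int k) l) (B (t - int k + l) (q - (t - int k + l)) w) = 0"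
      proof (cases "l > int k")
        case True then show ?thesis by (simp add: cN_big)
      next
        case False
        then have "t - int k + l < MB" using \<open>t < MB\<close> by simp
        then show ?thesis using MB by simp
      qed
    qed
    show ?thesis unfolding b z by simp
  next
    case False
    then have tq: "t > q - PA + int k" using t by auto
    have z: "(\<lambda>l. scale (cN (int k) l) (A (t - int k + l) (q - (t - int k + l)) w)) = (\<lambda>l. 0)"
    proof (rule ext)
      fix l show "scale (cN (int k) l) (A (t - int k + l) (q - (t - int k + l)) w) = 0"
      proof (cases "l < 0")
        case True then show ?thesis by (simp add: cN_negidx)
      next
        case False
        then have "q - (t - int k + l) < PA" using tq by simp
        then show ?thesis using PA by simp
      qed
    qed
    show ?thesis unfolding a z by simp
  qed
qed

lemma forward_w:
  fixes PA MB J :: int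
  assumes PA: "\<forall>p<PA. \<forall>m. A m p w = 0" and MB: "\<forall>m<MB. \<forall>p. B m p w = 0"
    and CJ: "\<forall>j<J. \<forall>q w. C j q w = 0"
    and c1: "\<And>m p. mult2 scale (binom_xy (int k)) (\<lambda>a b. A a b w) m p = mult2 scale (binom_xy (int k)) (\<lambda>a b. B a b w) m p"
    and c2: "\<And>j q. subst_exp scale (mult2 scale (binom_xy (int k)) (\<lambda>a b. A a b w)) j q = exp_rhs scale k C w j q"
  shows "delta_term1 scale A w r m p - delta_term2 scale B w r m p = delta_rhs scale C w r m p"
proof -
  define q where "q = m + p + 1"
  define \<Phi> where "\<Phi> t = mult2 scale (binom_xy (int k)) (\<lambda>a b. A a b w) t (q + int k - t)" for t
  note PF = Phi_facts[where A=A and B=B and w=w and k=k and q=q and PA=PA and MB=MB, OF PA MB c1, folded \<Phi>_def]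
  have aT: "\<And>t. t > q - PA \<Longrightarrow> (\<lambda>t. A t (q - t) w) t = 0" using PA by simp
  have bM: "\<And>t. t < MB \<Longrightarrow> (\<lambda>t. B t (q - t) w) t = 0" using MB by simp
  have gJ: "\<And>j. j < J \<Longrightarrow> (\<lambda>j. C j q w) j = 0" using CJ by simp
  have S: "Sum_any (\<lambda>i. scale (cN (- r - 1) i) ((\<lambda>t. A t (q - t) w) (m + r + 1 + i)))
         - Sum_any (\<lambda>i. scale ((-1) powi (- r - 1) * cN (- r - 1) i) ((\<lambda>t. B t (q - t) w) (m - i)))
       = Sum_any (\<lambda>t. scale (((1 + fls_X) powi (t - m - 1)) $$ (r + int k)) (\<Phi> t))"
    by (rule core_S[where \<alpha>="\<lambda>t. A t (q - t) w" and \<beta>="\<lambda>t. B t (q - t) w" and \<Phi>=\<Phi> and TA="q - PA"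
          and M=MB and Lo=MB and Hi="q - PA + int k" and k=k, OF aT bM PF(1) PF(2) PF(3)])
  have P1: "Sum_any (\<lambda>t. scale (Et t $$ j) (\<Phi> t)) = Sum_any (\<lambda>l. scale ((ElF powi int k) $$ l) ((\<lambda>j. C j q w) (j - l)))" for j
    using c2[of j "q + int k"] by (simp add: subst_eq exprhs_eq \<Phi>_def)
  note gK = gamma_K_of_P1[where \<gamma>="\<lambda>j. C j q w" and \<Phi>=\<Phi> and J=J and Lo=MB and Hi="q - PA + int k" and k=k, OF gJ PF(3) P1]
  note P2 = P2_of_gammaK[where \<gamma>="\<lambda>j. C j q w" and \<Phi>=\<Phi> and Lo=MB and Hi="q - PA + int k" and k=k, OF PF(3) gK]
  have R: "delta_rhs scale C w r m p = Sum_any (\<lambda>t. scale (((1 + fls_X) powi (- m - 1 + t)) $$ (r + int k)) (\<Phi> t))"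
    unfolding drhs using R_of_P2[where G="\<lambda>s. Sum_any (\<lambda>j. scale ((LlF powi j) $$ s) (C j q w))" and \<Phi>=\<Phi> and Lo=MB and Hi="q - PA + int k" and k=k, OF PF(3) P2, of "- m - 1" r]
    by (simp add: q_def algebra_simps)
  have T1: "delta_term1 scale A w r m p = Sum_any (\<lambda>i. scale (cN (- r - 1) i) ((\<lambda>t. A t (q - t) w) (m + r + 1 + i)))"
  proof -
    have e: "q - (m + r + 1 + i) = p - r - i" for i by (simp add: q_def)
    show ?thesis by (simp only: dt1 e)
  qed
  have T2: "delta_term2 scale B w r m p = Sum_any (\<lambda>i. scale ((-1) powi (- r - 1) * cN (- r - 1) i) ((\<lambda>t. B t (q - t) w) (m - i)))"
  proof -
    have e: "q - (m - i) = p + 1 + i" for i by (simp add: q_def)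
    show ?thesis by (simp only: dt2 e)
  qed
  show ?thesis unfolding T1 T2 S R by (simp add: algebra_simps)
qed


lemma b1_zero_sum: "Sum_any (\<lambda>s. scale (((1 + fls_X :: complex fls) powi 0) $$ (r - s)) (G s)) = G r"
proof -
  have e: "(\<lambda>s. scale (((1 + fls_X :: complex fls) powi 0) $$ (r - s)) (G s)) = (\<lambda>s. if s = r then G s else 0)"
    by (auto simp: fun_eq_iff)
  show ?thesis unfolding e by simp
qed

lemma converse_c1:
  fixes PA MB J :: int
  assumes CJ: "\<forall>j<J. \<forall>q w. C j q w = 0" and kJ: "- J \<le> int k"
    and D: "\<And>r m p. delta_term1 scale A w r m p - delta_term2 scale B w r m p = delta_rhs scale C w r m p"
  shows "mult2 scale (binom_xy (int k)) (\<lambda>a b. A a b w) m p = mult2 scale (binom_xy (int k)) (\<lambda>a b. B a b w) m p"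
proof -
  define r where "r = - int k - 1"
  define p' where "p' = p - int k - 1"
  have T1: "delta_term1 scale A w r m p' = mult2 scale (binom_xy (int k)) (\<lambda>a b. A a b w) m p"
  proof -
    have e: "- r - 1 = int k" "m + r + 1 + i = m - int k + i" "p' - r - i = p - i" for i
      by (simp_all add: r_def p'_def)
    show ?thesis by (simp only: dt1 e mult2_bxy)
  qed
  have T2: "delta_term2 scale B w r m p' = mult2 scale (binom_xy (int k)) (\<lambda>a b. B a b w) m p"
  proof -
    have e: "- r - 1 = int k" "p' + 1 + i = p - int k + i" for i
      by (simp_all add: r_def p'_def)
    have "delta_term2 scale B w r m p' = Sum_any (\<lambda>i. scale ((-1) powi (int k) * cN (int k) i) (B (m - i) (p - int k + i) w))"
      by (simp only: dt2 e)
    also have "\<dots> = scale ((-1) ^ k) (Sum_any (\<lambda>i. scale (cN (int k) i) (B (m - i) (p - int k + i) w)))"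
    proof -
      have "Sum_any (\<lambda>i. scale ((-1) powi (int k) * cN (int k) i) (B (m - i) (p - int k + i) w))
          = scale ((-1) powi (int k)) (Sum_any (\<lambda>i. scale (cN (int k) i) (B (m - i) (p - int k + i) w)))"
      proof (rule Sum_any_scale_const[of "{0..int k}"])
        fix i assume "i \<notin> {0..int k}"
        then show "scale (cN (int k) i) (B (m - i) (p - int k + i) w) = 0"
          by (cases "i < 0") (auto simp: cN_negidx cN_big)
      qed simp
      then show ?thesis by simp
    qed
    also have "\<dots> = Sum_any (\<lambda>l. scale (cN (int k) l) ((\<lambda>t. B t (m + p - int k - t) w) (m - int k + l)))"
      using Phi_rev[of k "\<lambda>t. B t (m + p - int k - t) w" m] by (simp add: algebra_simps)
    also have "\<dots> = mult2 scale (binom_xy (int k)) (\<lambda>a b. B a b w) m p"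
    proof -
      have e2: "m + p - int k - (m - int k + l) = p - l" for l by simp
      show ?thesis by (simp only: e2 mult2_bxy)
    qed
    finally show ?thesis .
  qed
  have R: "delta_rhs scale C w r m p' = 0"
    unfolding drhs
    by (rule R_zero[where J=J]) (use CJ kJ in \<open>auto simp: r_def\<close>)
  show ?thesis using D[of r m p'] unfolding T1 T2 R by simp
qed


lemma converse_c2:
  fixes PA MB J :: int
  assumes PA: "\<forall>p<PA. \<forall>m. A m p w = 0" and MB: "\<forall>m<MB. \<forall>p. B m p w = 0"
    and CJ: "\<forall>j<J. \<forall>q w. C j q w = 0"
    and c1: "\<And>m p. mult2 scale (binom_xy (int k)) (\<lambda>a b. A a b w) m p = mult2 scale (binom_xy (int k)) (\<lambda>a b. B a b w) m p"
    and D: "\<And>r m p. delta_term1 scale A w r m p - delta_term2 scale B w r m p = delta_rhs scale C w r m p"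
  shows "subst_exp scale (mult2 scale (binom_xy (int k)) (\<lambda>a b. A a b w)) j q' = exp_rhs scale k C w j q'"
proof -
  define q where "q = q' - int k"
  define \<Phi> where "\<Phi> t = mult2 scale (binom_xy (int k)) (\<lambda>a b. A a b w) t (q + int k - t)" for t
  note PF = Phi_facts[where A=A and B=B and w=w and k=k and q=q and PA=PA and MB=MB, OF PA MB c1, folded \<Phi>_def]
  have aT: "\<And>t. t > q - PA \<Longrightarrow> (\<lambda>t. A t (q - t) w) t = 0" using PA by simp
  have bM: "\<And>t. t < MB \<Longrightarrow> (\<lambda>t. B t (q - t) w) t = 0" using MB by simp
  have gJ: "\<And>j. j < J \<Longrightarrow> (\<lambda>j. C j q w) j = 0" using CJ by simp
  have P2: "Sum_any (\<lambda>j. scale ((LlF powi j) $$ s) (C j q w))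
       = Sum_any (\<lambda>t. scale (((1 + fls_X) powi t) $$ (s + int k)) (\<Phi> t))" for s
  proof -
    have S: "Sum_any (\<lambda>i. scale (cN (- s - 1) i) ((\<lambda>t. A t (q - t) w) (- 1 + s + 1 + i)))
         - Sum_any (\<lambda>i. scale ((-1) powi (- s - 1) * cN (- s - 1) i) ((\<lambda>t. B t (q - t) w) (- 1 - i)))
       = Sum_any (\<lambda>t. scale (((1 + fls_X) powi (t - (- 1) - 1)) $$ (s + int k)) (\<Phi> t))"
      by (rule core_S[where \<alpha>="\<lambda>t. A t (q - t) w" and \<beta>="\<lambda>t. B t (q - t) w" and \<Phi>=\<Phi> and TA="q - PA"
          and M=MB and Lo=MB and Hi="q - PA + int k" and k=k and m="-1", OF aT bM PF(1) PF(2) PF(3)])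
    have T1: "delta_term1 scale A w s (- 1) q = Sum_any (\<lambda>i. scale (cN (- s - 1) i) ((\<lambda>t. A t (q - t) w) (- 1 + s + 1 + i)))"
    proof -
      have e: "q - (- 1 + s + 1 + i) = q - s - i" for i by simp
      show ?thesis by (simp only: dt1 e)
    qed
    have T2: "delta_term2 scale B w s (- 1) q = Sum_any (\<lambda>i. scale ((-1) powi (- s - 1) * cN (- s - 1) i) ((\<lambda>t. B t (q - t) w) (- 1 - i)))"
    proof -
      have e: "q - (- 1 - i) = q + 1 + i" for i by simp
      show ?thesis by (simp only: dt2 e)
    qed
    have R: "delta_rhs scale C w s (- 1) q = Sum_any (\<lambda>j. scale ((LlF powi j) $$ s) (C j q w))"
    proof -
      have e: "- (- 1) - 1 = (0::int)" "q + - 1 + 1 = q" by simp_all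
      show ?thesis unfolding drhs e by (rule b1_zero_sum)
    qed
    have e3: "t - (- 1) - 1 = t" for t :: int by simp
    show ?thesis using D[of s "- 1" q] unfolding T1 T2 R S e3 by simp
  qed
  note gK = gamma_K_of_P2[where \<gamma>="\<lambda>j. C j q w" and \<Phi>=\<Phi> and J=J and Lo=MB and Hi="q - PA + int k" and k=k, OF gJ PF(3) P2]
  note P1 = P1_of_gammaK[where \<gamma>="\<lambda>j. C j q w" and \<Phi>=\<Phi> and Lo=MB and Hi="q - PA + int k" and k=k, OF PF(3) gK]
  have e1: "q' - t = q + int k - t" for t by (simp add: q_def)
  have e2: "q' - int k = q" by (simp add: q_def)
  show ?thesis unfolding subst_eq exprhs_eq e1 e2 \<Phi>_def[symmetric] using P1[of j] by simp
qed

lemma main: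
  assumes A_trunc2: "\<And>w. \<exists>P. \<forall>p<P. \<forall>m. A m p w = 0"
    and B_trunc1: "\<And>w. \<exists>M. \<forall>m<M. \<forall>p. B m p w = 0"
    and C_trunc0: "\<exists>J. \<forall>j<J. \<forall>q w. C j q w = 0"
  shows "(\<exists>k::nat.
            (\<forall>w m p. mult2 scale (binom_xy (int k)) (\<lambda>a b. A a b w) m p
                    = mult2 scale (binom_xy (int k)) (\<lambda>a b. B a b w) m p)
          \<and> (\<forall>w j q. subst_exp scale (mult2 scale (binom_xy (int k)) (\<lambda>a b. A a b w)) j q
                    = exp_rhs scale k C w j q))
       \<longleftrightarrow>
         (\<forall>w r m p. delta_term1 scale A w r m p - delta_term2 scale B w r m p
                    = delta_rhs scale C w r m p)"
proof -
  obtain J where CJ: "\<forall>j<J. \<forall>q w. C j q w = 0" using C_trunc0 by blast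
  show ?thesis
  proof
    assume "\<exists>k::nat. (\<forall>w m p. mult2 scale (binom_xy (int k)) (\<lambda>a b. A a b w) m p
                    = mult2 scale (binom_xy (int k)) (\<lambda>a b. B a b w) m p)
          \<and> (\<forall>w j q. subst_exp scale (mult2 scale (binom_xy (int k)) (\<lambda>a b. A a b w)) j q
                    = exp_rhs scale k C w j q)"
    then obtain k :: nat where c1: "\<And>w m p. mult2 scale (binom_xy (int k)) (\<lambda>a b. A a b w) m p
                    = mult2 scale (binom_xy (int k)) (\<lambda>a b. B a b w) m p"
      and c2: "\<And>w j q. subst_exp scale (mult2 scale (binom_xy (int k)) (\<lambda>a b. A a b w)) j q
                    = exp_rhs scale k C w j q" by blast
    show "\<forall>w r m p. delta_term1 scale A w r m p - delta_term2 scale B w r m p = delta_rhs scale C w r m p"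
    proof (intro allI)
      fix w r m p
      obtain PA where PA: "\<forall>p<PA. \<forall>m. A m p w = 0" using A_trunc2 by blast
      obtain MB where MB: "\<forall>m<MB. \<forall>p. B m p w = 0" using B_trunc1 by blast
      show "delta_term1 scale A w r m p - delta_term2 scale B w r m p = delta_rhs scale C w r m p"
        by (rule forward_w[where A=A and B=B and C=C and w=w and k=k, OF PA MB CJ c1 c2])
    qed
  next
    assume D: "\<forall>w r m p. delta_term1 scale A w r m p - delta_term2 scale B w r m p = delta_rhs scale C w r m p"
    define k where "k = nat (- J)"
    have kJ: "- J \<le> int k" by (simp add: k_def)
    have c1: "mult2 scale (binom_xy (int k)) (\<lambda>a b. A a b w) m p
                    = mult2 scale (binom_xy (int k)) (\<lambda>a b. B a b w) m p" for w m p
      by (rule converse_c1[where A=A and B=B and C=C and w=w and k=k, OF CJ kJ]) (use D in blast)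
    have c2: "subst_exp scale (mult2 scale (binom_xy (int k)) (\<lambda>a b. A a b w)) j q
                    = exp_rhs scale k C w j q" for w j q
    proof -
      obtain PA where PA: "\<forall>p<PA. \<forall>m. A m p w = 0" using A_trunc2 by blast
      obtain MB where MB: "\<forall>m<MB. \<forall>p. B m p w = 0" using B_trunc1 by blast
      show ?thesis by (rule converse_c2[where A=A and B=B and C=C and w=w and k=k, OF PA MB CJ c1]) (use D in blast)
    qed
    show "\<exists>k::nat. (\<forall>w m p. mult2 scale (binom_xy (int k)) (\<lambda>a b. A a b w) m p
                    = mult2 scale (binom_xy (int k)) (\<lambda>a b. B a b w) m p)
          \<and> (\<forall>w j q. subst_exp scale (mult2 scale (binom_xy (int k)) (\<lambda>a b. A a b w)) j q
                    = exp_rhs scale k C w j q)"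
      using c1 c2 by blast
  qed
qed

end

theorem lemma5p8:
  fixes scale :: "complex \<Rightarrow> 'w::ab_group_add \<Rightarrow> 'w"
    and A B C :: "int \<Rightarrow> int \<Rightarrow> 'w \<Rightarrow> 'w"
  assumes W: "vector_space scale"
    and A_lin: "\<And>m p. Vector_Spaces.linear scale scale (A m p)"
    and B_lin: "\<And>m p. Vector_Spaces.linear scale scale (B m p)"
    and C_lin: "\<And>j q. Vector_Spaces.linear scale scale (C j q)"
    \<comment> \<open>A(x1,x2) in Hom(W, W((x1))((x2)))\<close>
    and A_trunc2: "\<And>w. \<exists>P. \<forall>p<P. \<forall>m. A m p w = 0"
    and A_trunc1: "\<And>w p. \<exists>M. \<forall>m<M. A m p w = 0"
    \<comment> \<open>B(x1,x2) in Hom(W, W((x2))((x1)))\<close>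
    and B_trunc1: "\<And>w. \<exists>M. \<forall>m<M. \<forall>p. B m p w = 0"
    and B_trunc2: "\<And>w m. \<exists>P. \<forall>p<P. B m p w = 0"
    \<comment> \<open>C(x0,x2) in (Hom(W, W((x2))))((x0))\<close>
    and C_trunc0: "\<exists>J. \<forall>j<J. \<forall>q w. C j q w = 0"
    and C_trunc2: "\<And>w j. \<exists>Q. \<forall>q<Q. C j q w = 0"
  shows "(\<exists>k::nat.
            (\<forall>w m p. mult2 scale (binom_xy (int k)) (\<lambda>a b. A a b w) m p
                    = mult2 scale (binom_xy (int k)) (\<lambda>a b. B a b w) m p)
          \<and> (\<forall>w j q. subst_exp scale (mult2 scale (binom_xy (int k)) (\<lambda>a b. A a b w)) j q
                    = exp_rhs scale k C w j q))
       \<longleftrightarrow>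
         (\<forall>w r m p. delta_term1 scale A w r m p - delta_term2 scale B w r m p
                    = delta_rhs scale C w r m p)"
proof -
  interpret cvs scale by (rule cvs.intro) (rule W)
  show ?thesis by (rule main[OF A_trunc2 B_trunc1 C_trunc0])
qed

end
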